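(* Let $Q\subset L^2(\mathbb{R})$ be bounded and $L^2$-equicontinuous, and let $\sigma>0$. Then \[ \lim_{\kappa\to\infty}\ \sup_{q\in Q}\ \|q\|_{E^\sigma_{\sigma,\kappa}}=0. \]
   Context: For $\sigma,s\in\mathbb{R}$ and $|\kappa|\ge1$, $\|q\|_{E^\sigma_{s,\kappa}}^2=\int\frac{|\kappa|^{2(s-\sigma)}|\xi|^{2\sigma}}{(4\kappa^2+\xi^2)^s}|\hat q(\xi)|^2\,d\xi$. $Q$ is $L^2$-equicontinuous if for every $\varepsilon>0$ there is $\eta>0$ with $\sup_{q\in Q}\sup_{|y|<\eta}\|q(\cdot+y)-q\|_{L^2}<\varepsilon$. *)

theory Defs
  imports "HOL-Analysis.Analysis"
begin

definition L2_space :: "(real \<Rightarrow> complex) set" where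
  "L2_space = {q. q \<in> borel_measurable lborel \<and> integrable lborel (\<lambda>x. (norm (q x))\<^sup>2)}"

definition L2_norm :: "(real \<Rightarrow> complex) \<Rightarrow> real" where
  "L2_norm q = sqrt (LINT x|lborel. (norm (q x))\<^sup>2)"

definition fourier :: "(real \<Rightarrow> complex) \<Rightarrow> real \<Rightarrow> complex" where
  "fourier f \<xi> = complex_of_real (1 / sqrt (2 * pi)) *
      (LINT x|lborel. exp (- \<i> * complex_of_real (x * \<xi>)) * f x)"

text \<open>Truncation to [-R,R]; for q in L^2 its Fourier transform converges in L^2 to the
  Plancherel Fourier transform of q.\<close>

definition trunc :: "real \<Rightarrow> (real \<Rightarrow> complex) \<Rightarrow> real \<Rightarrow> complex" where
  "trunc R q x = (if x \<in> {-R..R} then q x else 0)"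

definition E_weight :: "real \<Rightarrow> real \<Rightarrow> real \<Rightarrow> real \<Rightarrow> real" where
  "E_weight \<sigma> s \<kappa> \<xi> = \<bar>\<kappa>\<bar> powr (2 * (s - \<sigma>)) * \<bar>\<xi>\<bar> powr (2 * \<sigma>) / (4 * \<kappa>\<^sup>2 + \<xi>\<^sup>2) powr s"

text \<open>Squared E^sigma_{s,kappa} norm: integral of the weight against |hat q|^2, where hat q is the
  L^2 Fourier transform, realised as the limit over truncations.\<close>

definition E_norm_sq :: "real \<Rightarrow> real \<Rightarrow> real \<Rightarrow> (real \<Rightarrow> complex) \<Rightarrow> real" where
  "E_norm_sq \<sigma> s \<kappa> q =
     Lim at_top (\<lambda>R::real. LINT \<xi>|lborel. E_weight \<sigma> s \<kappa> \<xi> * (norm (fourier (trunc R q) \<xi>))\<^sup>2)"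

definition E_norm :: "real \<Rightarrow> real \<Rightarrow> real \<Rightarrow> (real \<Rightarrow> complex) \<Rightarrow> real" where
  "E_norm \<sigma> s \<kappa> q = sqrt (E_norm_sq \<sigma> s \<kappa> q)"

definition L2_equicontinuous :: "(real \<Rightarrow> complex) set \<Rightarrow> bool" where
  "L2_equicontinuous Q \<longleftrightarrow>
     (\<forall>\<epsilon>>0. \<exists>\<eta>>0. \<forall>q\<in>Q. \<forall>y. \<bar>y\<bar> < \<eta> \<longrightarrow> L2_norm (\<lambda>x. q (x + y) - q x) < \<epsilon>)"

end

theory Submission
  imports Defs "HOL-Probability.Characteristic_Functions"
begin

lemma gauss_ft_std:
  "(LINT x|lborel. complex_of_real (exp (- x\<^sup>2 / 2)) * exp (\<i> * complex_of_real (u * x)))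
     = complex_of_real (sqrt (2*pi) * exp (- u\<^sup>2 / 2))"
proof -
  have "char std_normal_distribution u = complex_of_real (exp (- (u^2) / 2))"
    by (simp add: char_std_normal_distribution)
  moreover have "char std_normal_distribution u = (LINT x|lborel. std_normal_density x *\<^sub>R exp (\<i> * complex_of_real (u * x)))"
    unfolding char_def
    by (subst integral_density) (auto simp: normal_density_nonneg)
  ultimately have e: "(LINT x|lborel. std_normal_density x *\<^sub>R exp (\<i> * complex_of_real (u * x))) = complex_of_real (exp (- (u^2) / 2))"
    by simp
  have "(LINT x|lborel. complex_of_real (exp (- x\<^sup>2 / 2)) * exp (\<i> * complex_of_real (u * x)))
     = (LINT x|lborel. complex_of_real (sqrt (2*pi)) * (std_normal_density x *\<^sub>R exp (\<i> * complex_of_real (u * x))))"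
    by (intro Bochner_Integration.integral_cong refl) (simp add: std_normal_density_def scaleR_conv_of_real)
  also have "\<dots> = complex_of_real (sqrt (2*pi)) * (LINT x|lborel. std_normal_density x *\<^sub>R exp (\<i> * complex_of_real (u * x)))"
    by (rule integral_mult_right_zero)
  finally show ?thesis using e by simp
qed

definition G :: "real \<Rightarrow> real \<Rightarrow> complex" where
  "G s t = (LINT \<xi>|lborel. complex_of_real (exp (- \<xi>\<^sup>2 / (2 * s\<^sup>2))) * exp (- \<i> * complex_of_real (t * \<xi>)))"

lemma G_eq:
  assumes s: "s > 0"
  shows "G s t = complex_of_real (s * sqrt (2*pi) * exp (- (s*t)\<^sup>2 / 2))"
proof -
  have "G s t = \<bar>s\<bar> *\<^sub>R (LINT x|lborel. complex_of_real (exp (- (0 + s * x)\<^sup>2 / (2 * s\<^sup>2))) * exp (- \<i> * complex_of_real (t * (0 + s * x))))"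
    unfolding G_def by (rule lborel_integral_real_affine) (use s in auto)
  also have "(LINT x|lborel. complex_of_real (exp (- (0 + s * x)\<^sup>2 / (2 * s\<^sup>2))) * exp (- \<i> * complex_of_real (t * (0 + s * x))))
     = (LINT x|lborel. complex_of_real (exp (- x\<^sup>2 / 2)) * exp (\<i> * complex_of_real ((- (s*t)) * x)))"
  proof (intro Bochner_Integration.integral_cong refl)
    fix x
    have e1: "- (0 + s * x)\<^sup>2 / (2 * s\<^sup>2) = - x\<^sup>2 / 2" using s by (simp add: power2_eq_square field_simps)
    have e2: "- \<i> * complex_of_real (t * (0 + s * x)) = \<i> * complex_of_real ((- (s*t)) * x)"
      by (simp add: algebra_simps)
    show "complex_of_real (exp (- (0 + s * x)\<^sup>2 / (2 * s\<^sup>2))) * exp (- \<i> * complex_of_real (t * (0 + s * x))) =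
         complex_of_real (exp (- x\<^sup>2 / 2)) * exp (\<i> * complex_of_real ((- (s*t)) * x))"
      by (simp only: e1 e2)
  qed
  also have "\<dots> = complex_of_real (sqrt (2*pi) * exp (- (s*t)\<^sup>2 / 2))"
    by (subst gauss_ft_std) simp
  finally show ?thesis using s by (simp add: scaleR_conv_of_real)
qed

definition FT :: "(real \<Rightarrow> complex) \<Rightarrow> real \<Rightarrow> complex" where
  "FT f \<xi> = (LINT x|lborel. exp (- \<i> * complex_of_real (x * \<xi>)) * f x)"

lemma norm_e[simp]: "norm (exp (- \<i> * complex_of_real t)) = 1"
proof -
  have "- \<i> * complex_of_real t = \<i> * complex_of_real (- t)" by simp
  then show ?thesis by (simp only: norm_exp_i_times)
qed

lemma FT_meas[measurable]:
  assumes [measurable]: "f \<in> borel_measurable borel"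
  shows "FT f \<in> borel_measurable borel"
  unfolding FT_def by measurable

lemma FT_bound:
  "norm (FT f \<xi>) \<le> (LINT x|lborel. norm (f x))"
  unfolding FT_def
  by (rule order_trans[OF integral_norm_bound]) (simp add: norm_mult)

lemma fourier_FT: "fourier f \<xi> = complex_of_real (1 / sqrt (2 * pi)) * FT f \<xi>"
  unfolding fourier_def FT_def ..

lemma norm_integral_le_nn:
  fixes f :: "'a \<Rightarrow> 'b::{banach, second_countable_topology}"
  shows "ennreal (norm (integral\<^sup>L M f)) \<le> (\<integral>\<^sup>+x. ennreal (norm (f x)) \<partial>M)"
proof (cases "integrable M f")
  case True then show ?thesis by (rule integral_norm_bound_ennreal)
next
  case False then show ?thesis by (simp add: not_integrable_integral_eq)
qed

definition gk :: "real \<Rightarrow> real \<Rightarrow> real" where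
  "gk s t = 2 * pi * normal_density 0 (1/s) t"

lemma G_gk: assumes s: "s > 0" shows "G s t = complex_of_real (gk s t)"
proof -
  have "s * sqrt (2*pi) * exp (- (s*t)\<^sup>2 / 2) = 2 * pi * (1 / sqrt (2 * pi * (1/s)\<^sup>2) * exp (-(t - 0)\<^sup>2/ (2 * (1/s)\<^sup>2)))"
  proof -
    have a: "sqrt (2 * pi * (1/s)\<^sup>2) = sqrt (2*pi) / s" using s
      by (simp add: real_sqrt_mult real_sqrt_divide power_divide)
    have b: "-(t - 0)\<^sup>2/ (2 * (1/s)\<^sup>2) = - (s*t)\<^sup>2 / 2" using s
      by (simp add: power2_eq_square field_simps)
    have c: "2 * pi = sqrt (2*pi) * sqrt (2*pi)" by simp
    show ?thesis unfolding a b using s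
      by (subst (2) c) (simp add: field_simps)
  qed
  then have e: "s * sqrt (2*pi) * exp (- (s*t)\<^sup>2 / 2) = gk s t"
    unfolding gk_def normal_density_def .
  show ?thesis unfolding G_eq[OF s] e ..
qed

lemma gk_nonneg: "s > 0 \<Longrightarrow> 0 \<le> gk s t"
  unfolding gk_def by (simp add: normal_density_nonneg)

lemma gk_meas[measurable]: "gk s \<in> borel_measurable borel"
  unfolding gk_def normal_density_def by measurable

lemma gk_even: "gk s (- t) = gk s t"
  unfolding gk_def normal_density_def by simp

lemma nn_gk: assumes s: "s > 0" shows "(\<integral>\<^sup>+t. ennreal (gk s t) \<partial>lborel) = ennreal (2*pi)"
proof -
  have "(\<integral>\<^sup>+t. ennreal (gk s t) \<partial>lborel) = ennreal (LINT t|lborel. gk s t)"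
    using s unfolding gk_def
    by (intro nn_integral_eq_integral) (auto simp: normal_density_nonneg)
  also have "(LINT t|lborel. gk s t) = 2 * pi"
    using s unfolding gk_def by simp
  finally show ?thesis .
qed

lemma nn_gk_shift1: assumes s: "s > 0" shows "(\<integral>\<^sup>+y. ennreal (gk s (x - y)) \<partial>lborel) = ennreal (2*pi)"
proof -
  have "(\<integral>\<^sup>+t. ennreal (gk s t) \<partial>lborel) = (\<integral>\<^sup>+y. ennreal (gk s (x + (-1) * y)) \<partial>lborel)"
    using nn_integral_real_affine[where c="-1" and t=x and f="\<lambda>t. ennreal (gk s t)"] by simp
  then show ?thesis using nn_gk[OF s] by simp
qed

lemma nn_gk_shift2: assumes s: "s > 0" shows "(\<integral>\<^sup>+x. ennreal (gk s (x - y)) \<partial>lborel) = ennreal (2*pi)"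
proof -
  have "(\<integral>\<^sup>+t. ennreal (gk s t) \<partial>lborel) = (\<integral>\<^sup>+x. ennreal (gk s (-y + 1 * x)) \<partial>lborel)"
    using nn_integral_real_affine[where c="1" and t="-y" and f="\<lambda>t. ennreal (gk s t)"] by simp
  then show ?thesis using nn_gk[OF s] by simp
qed

lemma borel_measurable_cnj'[measurable]:
  assumes "f \<in> borel_measurable M" shows "(\<lambda>x. cnj (f x)) \<in> borel_measurable M"
  by (rule borel_measurable_continuous_on[OF continuous_on_cnj[OF continuous_on_id] assms])

lemma plancherel_gauss:
  fixes f :: "real \<Rightarrow> complex"
  assumes fm[measurable]: "f \<in> borel_measurable borel" and fi: "integrable lborel f" and s: "s > 0"
  shows "(\<integral>\<^sup>+\<xi>. ennreal (exp (- \<xi>\<^sup>2 / (2 * s\<^sup>2)) * (norm (FT f \<xi>))\<^sup>2) \<partial>lborel)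
          \<le> 2 * pi * (\<integral>\<^sup>+x. ennreal ((norm (f x))\<^sup>2) \<partial>lborel)"
proof -
  define h where "h \<xi> = exp (- \<xi>\<^sup>2 / (2 * s\<^sup>2))" for \<xi>
  define F where "F = FT f"
  define N where "N = (LINT x|lborel. norm (f x))"
  have hm[measurable]: "h \<in> borel_measurable borel" unfolding h_def by measurable
  have Fm[measurable]: "F \<in> borel_measurable borel" unfolding F_def by measurable
  have FN: "norm (F \<xi>) \<le> N" for \<xi> unfolding F_def N_def by (rule FT_bound)
  have N0: "0 \<le> N" unfolding N_def by simp
  have h0: "0 < h \<xi>" for \<xi> unfolding h_def by simp
  have hint: "integrable lborel h"
  proof -
    have "integrable lborel (\<lambda>\<xi>. sqrt (2 * pi * s\<^sup>2) * normal_density 0 s \<xi>)"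
      using s by (intro integrable_mult_right integrable_normal_density) auto
    moreover have "sqrt (2 * pi * s\<^sup>2) * normal_density 0 s \<xi> = h \<xi>" for \<xi>
      using s unfolding normal_density_def h_def by simp
    ultimately show ?thesis by simp
  qed
  have int_a: "integrable lborel (\<lambda>\<xi>. h \<xi> * (norm (F \<xi>))\<^sup>2)"
  proof (rule Bochner_Integration.integrable_bound[where f="\<lambda>\<xi>. N\<^sup>2 * h \<xi>"])
    show "integrable lborel (\<lambda>\<xi>. N\<^sup>2 * h \<xi>)" using hint by simp
    show "AE \<xi> in lborel. norm (h \<xi> * (norm (F \<xi>))\<^sup>2) \<le> norm (N\<^sup>2 * h \<xi>)"
    proof (rule AE_I2)
      fix \<xi>
      have "(norm (F \<xi>))\<^sup>2 \<le> N\<^sup>2" using FN[of \<xi>] by (simp add: power_mono)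
      then show "norm (h \<xi> * (norm (F \<xi>))\<^sup>2) \<le> norm (N\<^sup>2 * h \<xi>)"
        using h0[of \<xi>] by (simp add: abs_mult mult_left_mono mult.commute)
    qed
  qed simp
  have step_b: "(\<integral>\<^sup>+\<xi>. ennreal (h \<xi> * (norm (F \<xi>))\<^sup>2) \<partial>lborel) = ennreal (LINT \<xi>|lborel. h \<xi> * (norm (F \<xi>))\<^sup>2)"
    using h0 by (intro nn_integral_eq_integral int_a AE_I2) (simp add: less_imp_le)
  have step_c: "(LINT \<xi>|lborel. h \<xi> * (norm (F \<xi>))\<^sup>2) = Re (LINT \<xi>|lborel. complex_of_real (h \<xi>) * F \<xi> * cnj (F \<xi>))"
  proof -
    have "complex_of_real (h \<xi>) * F \<xi> * cnj (F \<xi>) = complex_of_real (h \<xi> * (norm (F \<xi>))\<^sup>2)" for \<xi>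
    proof -
      have "complex_of_real (h \<xi>) * F \<xi> * cnj (F \<xi>) = complex_of_real (h \<xi>) * complex_of_real ((norm (F \<xi>))\<^sup>2)"
        by (simp only: complex_norm_square mult.assoc)
      then show ?thesis by (simp only: of_real_mult)
    qed
    then show ?thesis by (simp only: integral_complex_of_real Re_complex_of_real)
  qed
  define Psi where "Psi x = (LINT \<xi>|lborel. exp (- \<i> * complex_of_real (x * \<xi>)) * (complex_of_real (h \<xi>) * cnj (F \<xi>)))" for x
  have hFint: "integrable lborel (\<lambda>\<xi>. complex_of_real (h \<xi>) * cnj (F \<xi>))"
  proof (rule Bochner_Integration.integrable_bound[where f="\<lambda>\<xi>. N * h \<xi>"])
    show "integrable lborel (\<lambda>\<xi>. N * h \<xi>)" using hint by simp
    show "AE \<xi> in lborel. norm (complex_of_real (h \<xi>) * cnj (F \<xi>)) \<le> norm (N * h \<xi>)"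
    proof (rule AE_I2)
      fix \<xi>
      show "norm (complex_of_real (h \<xi>) * cnj (F \<xi>)) \<le> norm (N * h \<xi>)"
        using h0[of \<xi>] FN[of \<xi>] N0 by (simp add: norm_mult abs_mult mult.commute mult_left_mono)
    qed
  qed simp
  have step_d: "(LINT \<xi>|lborel. complex_of_real (h \<xi>) * F \<xi> * cnj (F \<xi>)) = (LINT x|lborel. f x * Psi x)"
  proof -
    have "(LINT \<xi>|lborel. complex_of_real (h \<xi>) * F \<xi> * cnj (F \<xi>))
       = (LINT \<xi>|lborel. LINT x|lborel. (exp (- \<i> * complex_of_real (x * \<xi>)) * f x) * (complex_of_real (h \<xi>) * cnj (F \<xi>)))"
    proof (intro Bochner_Integration.integral_cong refl)
      fix \<xi>
      show "complex_of_real (h \<xi>) * F \<xi> * cnj (F \<xi>) = (LINT x|lborel. (exp (- \<i> * complex_of_real (x * \<xi>)) * f x) * (complex_of_real (h \<xi>) * cnj (F \<xi>)))"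
        unfolding integral_mult_left_zero F_def FT_def by (simp add: mult_ac)
    qed
    also have "\<dots> = (LINT x|lborel. LINT \<xi>|lborel. (exp (- \<i> * complex_of_real (x * \<xi>)) * f x) * (complex_of_real (h \<xi>) * cnj (F \<xi>)))"
    proof (rule lborel_pair.Fubini_integral)
      show "integrable (lborel \<Otimes>\<^sub>M lborel) (\<lambda>(x, \<xi>). (exp (- \<i> * complex_of_real (x * \<xi>)) * f x) * (complex_of_real (h \<xi>) * cnj (F \<xi>)))"
      proof (rule lborel_pair.Fubini_integrable)
        show "(\<lambda>(x, \<xi>). (exp (- \<i> * complex_of_real (x * \<xi>)) * f x) * (complex_of_real (h \<xi>) * cnj (F \<xi>))) \<in> borel_measurable (lborel \<Otimes>\<^sub>M lborel)"
          by measurable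
        have "integrable lborel (\<lambda>x. norm (f x) * (LINT \<xi>|lborel. norm (complex_of_real (h \<xi>) * cnj (F \<xi>))))"
          using fi by (intro integrable_mult_left integrable_norm)
        then show "integrable lborel (\<lambda>x. LINT \<xi>|lborel. norm (case (x, \<xi>) of (x, \<xi>) \<Rightarrow> (exp (- \<i> * complex_of_real (x * \<xi>)) * f x) * (complex_of_real (h \<xi>) * cnj (F \<xi>))))"
          by (simp add: norm_mult)
        show "AE x in lborel. integrable lborel (\<lambda>\<xi>. case (x, \<xi>) of (x, \<xi>) \<Rightarrow> (exp (- \<i> * complex_of_real (x * \<xi>)) * f x) * (complex_of_real (h \<xi>) * cnj (F \<xi>)))"
        proof (rule AE_I2)
          fix x
          show "integrable lborel (\<lambda>\<xi>. case (x, \<xi>) of (x, \<xi>) \<Rightarrow> (exp (- \<i> * complex_of_real (x * \<xi>)) * f x) * (complex_of_real (h \<xi>) * cnj (F \<xi>)))"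
          proof (rule Bochner_Integration.integrable_bound[where f="\<lambda>\<xi>. norm (f x) * (complex_of_real (h \<xi>) * cnj (F \<xi>))"])
            show "integrable lborel (\<lambda>\<xi>. norm (f x) * (complex_of_real (h \<xi>) * cnj (F \<xi>)))"
              using hFint by (rule integrable_mult_right)
          qed (auto simp: norm_mult)
        qed
      qed
    qed
    also have "\<dots> = (LINT x|lborel. f x * Psi x)"
    proof (intro Bochner_Integration.integral_cong refl)
      fix x
      show "(LINT \<xi>|lborel. (exp (- \<i> * complex_of_real (x * \<xi>)) * f x) * (complex_of_real (h \<xi>) * cnj (F \<xi>))) = f x * Psi x"
        unfolding Psi_def integral_mult_right_zero[symmetric] by (simp add: mult_ac)
    qed
    finally show ?thesis .
  qed
  have e_mult: "exp (- \<i> * complex_of_real (x * \<xi>)) * exp (\<i> * complex_of_real (y * \<xi>)) = exp (- \<i> * complex_of_real ((x - y) * \<xi>))" for x y \<xi>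
  proof -
    have "- \<i> * complex_of_real (x * \<xi>) + \<i> * complex_of_real (y * \<xi>) = - \<i> * complex_of_real ((x - y) * \<xi>)"
      by (simp add: algebra_simps)
    then show ?thesis by (simp only: mult_exp_exp)
  qed
  have cnjF: "cnj (F \<xi>) = (LINT y|lborel. exp (\<i> * complex_of_real (y * \<xi>)) * cnj (f y))" for \<xi>
  proof -
    have c: "cnj (exp (- \<i> * complex_of_real (y * \<xi>)) * f y) = exp (\<i> * complex_of_real (y * \<xi>)) * cnj (f y)" for y
      by (simp add: exp_cnj)
    have "cnj (F \<xi>) = (LINT y|lborel. cnj (exp (- \<i> * complex_of_real (y * \<xi>)) * f y))"
      unfolding F_def FT_def by (rule Bochner_Integration.integral_cnj[symmetric])
    then show ?thesis by (simp only: c)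
  qed
  have step_f: "Psi x = (LINT y|lborel. cnj (f y) * complex_of_real (gk s (x - y)))" for x
  proof -
    have "Psi x = (LINT \<xi>|lborel. LINT y|lborel. (exp (- \<i> * complex_of_real (x * \<xi>)) * complex_of_real (h \<xi>)) * (exp (\<i> * complex_of_real (y * \<xi>)) * cnj (f y)))"
    proof (unfold Psi_def, intro Bochner_Integration.integral_cong refl)
      fix \<xi>
      show "exp (- \<i> * complex_of_real (x * \<xi>)) * (complex_of_real (h \<xi>) * cnj (F \<xi>)) = (LINT y|lborel. (exp (- \<i> * complex_of_real (x * \<xi>)) * complex_of_real (h \<xi>)) * (exp (\<i> * complex_of_real (y * \<xi>)) * cnj (f y)))"
        unfolding integral_mult_right_zero cnjF by (simp add: mult_ac)
    qed
    also have "\<dots> = (LINT y|lborel. LINT \<xi>|lborel. (exp (- \<i> * complex_of_real (x * \<xi>)) * complex_of_real (h \<xi>)) * (exp (\<i> * complex_of_real (y * \<xi>)) * cnj (f y)))"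
    proof (rule lborel_pair.Fubini_integral)
      show "integrable (lborel \<Otimes>\<^sub>M lborel) (\<lambda>(y, \<xi>). (exp (- \<i> * complex_of_real (x * \<xi>)) * complex_of_real (h \<xi>)) * (exp (\<i> * complex_of_real (y * \<xi>)) * cnj (f y)))"
      proof (rule lborel_pair.Fubini_integrable)
        show "(\<lambda>(y, \<xi>). (exp (- \<i> * complex_of_real (x * \<xi>)) * complex_of_real (h \<xi>)) * (exp (\<i> * complex_of_real (y * \<xi>)) * cnj (f y))) \<in> borel_measurable (lborel \<Otimes>\<^sub>M lborel)"
          by measurable
        have nn: "norm ((exp (- \<i> * complex_of_real (x * \<xi>)) * complex_of_real (h \<xi>)) * (exp (\<i> * complex_of_real (y * \<xi>)) * cnj (f y))) = h \<xi> * norm (f y)" for y \<xi>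
          using h0[of \<xi>] by (simp add: norm_mult)
        have "integrable lborel (\<lambda>y. (LINT \<xi>|lborel. h \<xi>) * norm (f y))"
          using fi by (intro integrable_mult_right integrable_norm)
        then show "integrable lborel (\<lambda>y. LINT \<xi>|lborel. norm (case (y, \<xi>) of (y, \<xi>) \<Rightarrow> (exp (- \<i> * complex_of_real (x * \<xi>)) * complex_of_real (h \<xi>)) * (exp (\<i> * complex_of_real (y * \<xi>)) * cnj (f y))))"
          by (simp only: case_prod_conv nn integral_mult_left_zero)
        show "AE y in lborel. integrable lborel (\<lambda>\<xi>. case (y, \<xi>) of (y, \<xi>) \<Rightarrow> (exp (- \<i> * complex_of_real (x * \<xi>)) * complex_of_real (h \<xi>)) * (exp (\<i> * complex_of_real (y * \<xi>)) * cnj (f y)))"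
        proof (rule AE_I2)
          fix y
          show "integrable lborel (\<lambda>\<xi>. case (y, \<xi>) of (y, \<xi>) \<Rightarrow> (exp (- \<i> * complex_of_real (x * \<xi>)) * complex_of_real (h \<xi>)) * (exp (\<i> * complex_of_real (y * \<xi>)) * cnj (f y)))"
          proof (rule Bochner_Integration.integrable_bound[where f="\<lambda>\<xi>. h \<xi> * norm (f y)"])
            show "integrable lborel (\<lambda>\<xi>. h \<xi> * norm (f y))"
              using hint by (rule integrable_mult_left)
            show "AE \<xi> in lborel. norm (case (y, \<xi>) of (y, \<xi>) \<Rightarrow> (exp (- \<i> * complex_of_real (x * \<xi>)) * complex_of_real (h \<xi>)) * (exp (\<i> * complex_of_real (y * \<xi>)) * cnj (f y))) \<le> norm (h \<xi> * norm (f y))"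
              by (rule AE_I2, simp only: case_prod_conv nn) (use h0 in \<open>simp add: abs_mult less_imp_le\<close>)
          qed (simp only: case_prod_conv, measurable)
        qed
      qed
    qed
    also have "\<dots> = (LINT y|lborel. cnj (f y) * complex_of_real (gk s (x - y)))"
    proof (intro Bochner_Integration.integral_cong refl)
      fix y
      have "(LINT \<xi>|lborel. (exp (- \<i> * complex_of_real (x * \<xi>)) * complex_of_real (h \<xi>)) * (exp (\<i> * complex_of_real (y * \<xi>)) * cnj (f y)))
          = (LINT \<xi>|lborel. (complex_of_real (h \<xi>) * exp (- \<i> * complex_of_real ((x - y) * \<xi>))) * cnj (f y))"
      proof (intro Bochner_Integration.integral_cong refl)
        fix \<xi>
        show "(exp (- \<i> * complex_of_real (x * \<xi>)) * complex_of_real (h \<xi>)) * (exp (\<i> * complex_of_real (y * \<xi>)) * cnj (f y))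
          = (complex_of_real (h \<xi>) * exp (- \<i> * complex_of_real ((x - y) * \<xi>))) * cnj (f y)"
          using e_mult[of x \<xi> y] by (simp add: mult_ac)
      qed
      also have "\<dots> = G s (x - y) * cnj (f y)"
        unfolding integral_mult_left_zero G_def h_def ..
      finally show "(LINT \<xi>|lborel. (exp (- \<i> * complex_of_real (x * \<xi>)) * complex_of_real (h \<xi>)) * (exp (\<i> * complex_of_real (y * \<xi>)) * cnj (f y)))
         = cnj (f y) * complex_of_real (gk s (x - y))"
        using G_gk[OF s] by (simp add: mult.commute)
    qed
    finally show ?thesis .
  qed
  have gk0: "0 \<le> gk s t" for t using gk_nonneg[OF s] .
  have Psi_bd: "ennreal (norm (Psi x)) \<le> (\<integral>\<^sup>+y. ennreal (norm (f y) * gk s (x - y)) \<partial>lborel)" for x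
    using norm_integral_le_nn[of lborel "\<lambda>y. cnj (f y) * complex_of_real (gk s (x - y))"]
    unfolding step_f by (simp add: norm_mult gk0)
  define A where "A = (\<integral>\<^sup>+x. ennreal ((norm (f x))\<^sup>2) \<partial>lborel)"
  have T1: "(\<integral>\<^sup>+x. \<integral>\<^sup>+y. ennreal ((norm (f x))\<^sup>2 / 2 * gk s (x - y)) \<partial>lborel \<partial>lborel) = ennreal pi * A"
  proof -
    have "(\<integral>\<^sup>+x. \<integral>\<^sup>+y. ennreal ((norm (f x))\<^sup>2 / 2 * gk s (x - y)) \<partial>lborel \<partial>lborel)
        = (\<integral>\<^sup>+x. ennreal ((norm (f x))\<^sup>2 / 2) * (\<integral>\<^sup>+y. ennreal (gk s (x - y)) \<partial>lborel) \<partial>lborel)"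
      by (intro nn_integral_cong, subst nn_integral_cmult[symmetric]) (auto simp: ennreal_mult[symmetric] gk0 intro!: nn_integral_cong)
    also have "\<dots> = (\<integral>\<^sup>+x. ennreal pi * ennreal ((norm (f x))\<^sup>2) \<partial>lborel)"
      by (intro nn_integral_cong) (simp add: nn_gk_shift1[OF s] ennreal_mult[symmetric])
    also have "\<dots> = ennreal pi * A"
      unfolding A_def by (rule nn_integral_cmult) simp
    finally show ?thesis .
  qed
  have T2: "(\<integral>\<^sup>+x. \<integral>\<^sup>+y. ennreal ((norm (f y))\<^sup>2 / 2 * gk s (x - y)) \<partial>lborel \<partial>lborel) = ennreal pi * A"
  proof -
    have "(\<integral>\<^sup>+x. \<integral>\<^sup>+y. ennreal ((norm (f y))\<^sup>2 / 2 * gk s (x - y)) \<partial>lborel \<partial>lborel)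
        = (\<integral>\<^sup>+y. \<integral>\<^sup>+x. ennreal ((norm (f y))\<^sup>2 / 2 * gk s (x - y)) \<partial>lborel \<partial>lborel)"
      by (rule lborel_pair.Fubini'[symmetric]) measurable
    also have "\<dots> = (\<integral>\<^sup>+y. ennreal ((norm (f y))\<^sup>2 / 2) * (\<integral>\<^sup>+x. ennreal (gk s (x - y)) \<partial>lborel) \<partial>lborel)"
      by (intro nn_integral_cong, subst nn_integral_cmult[symmetric]) (auto simp: ennreal_mult[symmetric] gk0 intro!: nn_integral_cong)
    also have "\<dots> = (\<integral>\<^sup>+x. ennreal pi * ennreal ((norm (f x))\<^sup>2) \<partial>lborel)"
      by (intro nn_integral_cong) (simp add: nn_gk_shift2[OF s] ennreal_mult[symmetric])
    also have "\<dots> = ennreal pi * A"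
      unfolding A_def by (rule nn_integral_cmult) simp
    finally show ?thesis .
  qed
  have "(\<integral>\<^sup>+\<xi>. ennreal (h \<xi> * (norm (F \<xi>))\<^sup>2) \<partial>lborel) \<le> ennreal (norm (LINT x|lborel. f x * Psi x))"
    unfolding step_b step_c step_d by (intro ennreal_leI complex_Re_le_cmod)
  also have "\<dots> \<le> (\<integral>\<^sup>+x. ennreal (norm (f x * Psi x)) \<partial>lborel)"
    by (rule norm_integral_le_nn)
  also have "\<dots> = (\<integral>\<^sup>+x. ennreal (norm (f x)) * ennreal (norm (Psi x)) \<partial>lborel)"
    by (simp add: norm_mult ennreal_mult)
  also have "\<dots> \<le> (\<integral>\<^sup>+x. ennreal (norm (f x)) * (\<integral>\<^sup>+y. ennreal (norm (f y) * gk s (x - y)) \<partial>lborel) \<partial>lborel)"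
    by (intro nn_integral_mono mult_left_mono Psi_bd) simp
  also have "\<dots> = (\<integral>\<^sup>+x. \<integral>\<^sup>+y. ennreal (norm (f x) * (norm (f y) * gk s (x - y))) \<partial>lborel \<partial>lborel)"
    by (intro nn_integral_cong, subst nn_integral_cmult[symmetric]) (auto simp: ennreal_mult[symmetric] gk0 intro!: nn_integral_cong)
  also have "\<dots> \<le> (\<integral>\<^sup>+x. (\<integral>\<^sup>+y. ennreal ((norm (f x))\<^sup>2 / 2 * gk s (x - y)) \<partial>lborel) + (\<integral>\<^sup>+y. ennreal ((norm (f y))\<^sup>2 / 2 * gk s (x - y)) \<partial>lborel) \<partial>lborel)"
  proof (intro nn_integral_mono)
    fix x
    have "(\<integral>\<^sup>+y. ennreal (norm (f x) * (norm (f y) * gk s (x - y))) \<partial>lborel)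
        \<le> (\<integral>\<^sup>+y. ennreal ((norm (f x))\<^sup>2 / 2 * gk s (x - y)) + ennreal ((norm (f y))\<^sup>2 / 2 * gk s (x - y)) \<partial>lborel)"
    proof (intro nn_integral_mono)
      fix y
      have "0 \<le> (norm (f x) - norm (f y))\<^sup>2 * gk s (x - y)" using gk0 by simp
      then have "norm (f x) * (norm (f y) * gk s (x - y)) \<le> (norm (f x))\<^sup>2 / 2 * gk s (x - y) + (norm (f y))\<^sup>2 / 2 * gk s (x - y)"
        by (simp add: power2_eq_square algebra_simps)
      then have "ennreal (norm (f x) * (norm (f y) * gk s (x - y))) \<le> ennreal ((norm (f x))\<^sup>2 / 2 * gk s (x - y) + (norm (f y))\<^sup>2 / 2 * gk s (x - y))"
        by (rule ennreal_leI)
      also have "\<dots> = ennreal ((norm (f x))\<^sup>2 / 2 * gk s (x - y)) + ennreal ((norm (f y))\<^sup>2 / 2 * gk s (x - y))"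
        by (rule ennreal_plus) (simp_all add: gk0)
      finally show "ennreal (norm (f x) * (norm (f y) * gk s (x - y))) \<le> ennreal ((norm (f x))\<^sup>2 / 2 * gk s (x - y)) + ennreal ((norm (f y))\<^sup>2 / 2 * gk s (x - y))" .
    qed
    also have "\<dots> = (\<integral>\<^sup>+y. ennreal ((norm (f x))\<^sup>2 / 2 * gk s (x - y)) \<partial>lborel) + (\<integral>\<^sup>+y. ennreal ((norm (f y))\<^sup>2 / 2 * gk s (x - y)) \<partial>lborel)"
      by (rule nn_integral_add) auto
    finally show "(\<integral>\<^sup>+y. ennreal (norm (f x) * (norm (f y) * gk s (x - y))) \<partial>lborel)
        \<le> (\<integral>\<^sup>+y. ennreal ((norm (f x))\<^sup>2 / 2 * gk s (x - y)) \<partial>lborel) + (\<integral>\<^sup>+y. ennreal ((norm (f y))\<^sup>2 / 2 * gk s (x - y)) \<partial>lborel)" .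
  qed
  also have "\<dots> = (\<integral>\<^sup>+x. \<integral>\<^sup>+y. ennreal ((norm (f x))\<^sup>2 / 2 * gk s (x - y)) \<partial>lborel \<partial>lborel) + (\<integral>\<^sup>+x. \<integral>\<^sup>+y. ennreal ((norm (f y))\<^sup>2 / 2 * gk s (x - y)) \<partial>lborel \<partial>lborel)"
    by (rule nn_integral_add) measurable
  also have "\<dots> = 2 * pi * A"
    unfolding T1 T2 by (simp add: ennreal_mult[symmetric] distrib_right[symmetric] ennreal_plus[symmetric] del: ennreal_plus)
  finally show ?thesis unfolding A_def h_def F_def .
qed

lemma plancherel_FT:
  fixes f :: "real \<Rightarrow> complex"
  assumes fm[measurable]: "f \<in> borel_measurable borel" and fi: "integrable lborel f"
  shows "(\<integral>\<^sup>+\<xi>. ennreal ((norm (FT f \<xi>))\<^sup>2) \<partial>lborel) \<le> 2 * pi * (\<integral>\<^sup>+x. ennreal ((norm (f x))\<^sup>2) \<partial>lborel)"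
proof -
  define u where "u n \<xi> = ennreal (exp (- \<xi>\<^sup>2 / (2 * (real (Suc n))\<^sup>2)) * (norm (FT f \<xi>))\<^sup>2)" for n \<xi>
  have um[measurable]: "u n \<in> borel_measurable lborel" for n unfolding u_def by measurable
  have lim: "(\<lambda>n. u n \<xi>) \<longlonglongrightarrow> ennreal ((norm (FT f \<xi>))\<^sup>2)" for \<xi>
  proof -
    have "(\<lambda>n. inverse (real (Suc n))) \<longlonglongrightarrow> 0" by (rule LIMSEQ_inverse_real_of_nat)
    then have "(\<lambda>n. exp (- (\<xi>\<^sup>2 / 2) * (inverse (real (Suc n)))\<^sup>2) * (norm (FT f \<xi>))\<^sup>2) \<longlonglongrightarrow> exp (- (\<xi>\<^sup>2 / 2) * 0\<^sup>2) * (norm (FT f \<xi>))\<^sup>2"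
      by (intro tendsto_intros)
    then have t: "(\<lambda>n. exp (- (\<xi>\<^sup>2 / 2) * (inverse (real (Suc n)))\<^sup>2) * (norm (FT f \<xi>))\<^sup>2) \<longlonglongrightarrow> (norm (FT f \<xi>))\<^sup>2"
      by simp
    have eq: "(\<lambda>n. exp (- (\<xi>\<^sup>2 / 2) * (inverse (real (Suc n)))\<^sup>2) * (norm (FT f \<xi>))\<^sup>2) = (\<lambda>n. exp (- \<xi>\<^sup>2 / (2 * (real (Suc n))\<^sup>2)) * (norm (FT f \<xi>))\<^sup>2)"
      by (rule ext) (simp add: field_simps power2_eq_square)
    have "(\<lambda>n. exp (- \<xi>\<^sup>2 / (2 * (real (Suc n))\<^sup>2)) * (norm (FT f \<xi>))\<^sup>2) \<longlonglongrightarrow> (norm (FT f \<xi>))\<^sup>2"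
      using t by (simp only: eq)
    then show ?thesis unfolding u_def by (rule tendsto_ennrealI)
  qed
  have "(\<integral>\<^sup>+\<xi>. ennreal ((norm (FT f \<xi>))\<^sup>2) \<partial>lborel) = (\<integral>\<^sup>+\<xi>. liminf (\<lambda>n. u n \<xi>) \<partial>lborel)"
    by (intro nn_integral_cong lim_imp_Liminf[symmetric] lim) simp
  also have "\<dots> \<le> liminf (\<lambda>n. \<integral>\<^sup>+\<xi>. u n \<xi> \<partial>lborel)"
    by (rule nn_integral_liminf) simp
  also have "\<dots> \<le> limsup (\<lambda>n. \<integral>\<^sup>+\<xi>. u n \<xi> \<partial>lborel)"
    by (rule Liminf_le_Limsup) simp
  also have "\<dots> \<le> 2 * pi * (\<integral>\<^sup>+x. ennreal ((norm (f x))\<^sup>2) \<partial>lborel)"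
    by (rule Limsup_bounded, rule always_eventually, unfold u_def, rule allI, rule plancherel_gauss[OF fm fi]) simp
  finally show ?thesis .
qed

lemma plancherel_fourier:
  fixes f :: "real \<Rightarrow> complex"
  assumes fm[measurable]: "f \<in> borel_measurable borel" and fi: "integrable lborel f"
  shows "(\<integral>\<^sup>+\<xi>. ennreal ((norm (fourier f \<xi>))\<^sup>2) \<partial>lborel) \<le> (\<integral>\<^sup>+x. ennreal ((norm (f x))\<^sup>2) \<partial>lborel)"
proof -
  have e: "(norm (fourier f \<xi>))\<^sup>2 = (1 / (2 * pi)) * (norm (FT f \<xi>))\<^sup>2" for \<xi>
    unfolding fourier_FT by (simp add: norm_mult power_mult_distrib norm_divide power_divide)
  have "(\<integral>\<^sup>+\<xi>. ennreal ((norm (fourier f \<xi>))\<^sup>2) \<partial>lborel) = (\<integral>\<^sup>+\<xi>. ennreal (1 / (2 * pi)) * ennreal ((norm (FT f \<xi>))\<^sup>2) \<partial>lborel)"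
    unfolding e by (intro nn_integral_cong ennreal_mult) auto
  also have "\<dots> = ennreal (1 / (2 * pi)) * (\<integral>\<^sup>+\<xi>. ennreal ((norm (FT f \<xi>))\<^sup>2) \<partial>lborel)"
    by (rule nn_integral_cmult) measurable
  also have "\<dots> \<le> ennreal (1 / (2 * pi)) * (2 * pi * (\<integral>\<^sup>+x. ennreal ((norm (f x))\<^sup>2) \<partial>lborel))"
    by (intro mult_left_mono plancherel_FT fm fi) simp
  also have "\<dots> = (\<integral>\<^sup>+x. ennreal ((norm (f x))\<^sup>2) \<partial>lborel)"
  proof -
    have c: "ennreal (1 / (2 * pi)) * ennreal (2 * pi) = 1"
      by (subst ennreal_mult[symmetric]) auto
    show ?thesis by (simp only: c mult.assoc[symmetric] mult_1_left)
  qed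
  finally show ?thesis .
qed

lemma int_e:
  assumes fi: "integrable lborel f"
  shows "integrable lborel (\<lambda>x. exp (- \<i> * complex_of_real (x * \<xi>)) * f x)"
proof -
  have [measurable]: "f \<in> borel_measurable borel" using borel_measurable_integrable[OF fi] by simp
  show ?thesis
    by (rule Bochner_Integration.integrable_bound[OF fi]) (auto simp: norm_mult)
qed

lemma fourier_diff:
  assumes "integrable lborel f" "integrable lborel g"
  shows "fourier f \<xi> - fourier g \<xi> = fourier (\<lambda>x. f x - g x) \<xi>"
proof -
  have "FT (\<lambda>x. f x - g x) \<xi> = (LINT x|lborel. exp (- \<i> * complex_of_real (x * \<xi>)) * f x - exp (- \<i> * complex_of_real (x * \<xi>)) * g x)"
    unfolding FT_def by (intro Bochner_Integration.integral_cong refl) (simp add: algebra_simps)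
  also have "\<dots> = FT f \<xi> - FT g \<xi>"
    unfolding FT_def by (intro Bochner_Integration.integral_diff int_e assms)
  finally have "FT f \<xi> - FT g \<xi> = FT (\<lambda>x. f x - g x) \<xi>" ..
  then show ?thesis unfolding fourier_FT by (simp add: algebra_simps)
qed

lemma integrable_shift:
  fixes f :: "real \<Rightarrow> complex"
  assumes "integrable lborel f" shows "integrable lborel (\<lambda>x. f (x + y))"
  using lborel_integrable_real_affine[OF assms, of 1 y] by (simp add: add.commute)

lemma FT_shift:
  assumes fi: "integrable lborel f"
  shows "FT (\<lambda>x. f (x + y)) \<xi> = exp (\<i> * complex_of_real (y * \<xi>)) * FT f \<xi>"
proof -
  define k where "k z = exp (- \<i> * complex_of_real ((z - y) * \<xi>)) * f z" for z
  have "(LINT z|lborel. k z) = \<bar>1::real\<bar> *\<^sub>R (LINT x|lborel. k (y + 1 * x))"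
    by (rule lborel_integral_real_affine) simp
  also have "(LINT x|lborel. k (y + 1 * x)) = FT (\<lambda>x. f (x + y)) \<xi>"
    unfolding k_def FT_def by (intro Bochner_Integration.integral_cong refl) (simp add: add.commute)
  finally have 1: "FT (\<lambda>x. f (x + y)) \<xi> = (LINT z|lborel. k z)" by simp
  have ek: "k z = exp (\<i> * complex_of_real (y * \<xi>)) * (exp (- \<i> * complex_of_real (z * \<xi>)) * f z)" for z
  proof -
    have "\<i> * complex_of_real (y * \<xi>) + - \<i> * complex_of_real (z * \<xi>) = - \<i> * complex_of_real ((z - y) * \<xi>)"
      by (simp add: algebra_simps)
    then have "exp (- \<i> * complex_of_real ((z - y) * \<xi>)) = exp (\<i> * complex_of_real (y * \<xi>)) * exp (- \<i> * complex_of_real (z * \<xi>))"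
      by (simp only: mult_exp_exp)
    then show ?thesis unfolding k_def by (simp only: mult.assoc)
  qed
  have "(LINT z|lborel. k z) = (LINT z|lborel. exp (\<i> * complex_of_real (y * \<xi>)) * (exp (- \<i> * complex_of_real (z * \<xi>)) * f z))"
    by (rule Bochner_Integration.integral_cong[OF refl ek])
  also have "\<dots> = exp (\<i> * complex_of_real (y * \<xi>)) * FT f \<xi>"
    unfolding FT_def by (rule integral_mult_right_zero)
  finally show ?thesis using 1 by simp
qed

lemma fourier_shift_diff:
  assumes fi: "integrable lborel f"
  shows "fourier (\<lambda>x. f (x + y) - f x) \<xi> = (exp (\<i> * complex_of_real (y * \<xi>)) - 1) * fourier f \<xi>"
proof -
  have "fourier (\<lambda>x. f (x + y) - f x) \<xi> = fourier (\<lambda>x. f (x + y)) \<xi> - fourier f \<xi>"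
    by (rule fourier_diff[symmetric]) (use fi integrable_shift in auto)
  also have "\<dots> = (exp (\<i> * complex_of_real (y * \<xi>)) - 1) * fourier f \<xi>"
    unfolding fourier_FT FT_shift[OF fi] by algebra
  finally show ?thesis .
qed

lemma norm_eim1_sq: "(norm (exp (\<i> * complex_of_real t) - 1))\<^sup>2 = 2 - 2 * cos t"
proof -
  have "exp (\<i> * complex_of_real t) - 1 = Complex (cos t - 1) (sin t)"
    by (simp add: exp_Euler Complex_eq cos_of_real sin_of_real)
  then have "(norm (exp (\<i> * complex_of_real t) - 1))\<^sup>2 = (cos t - 1)\<^sup>2 + (sin t)\<^sup>2"
    by (simp add: cmod_power2)
  also have "\<dots> = 2 - 2 * cos t"
    using sin_cos_squared_add[of t] by (simp add: power2_eq_square algebra_simps)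
  finally show ?thesis .
qed

lemma avg_lower:
  assumes eta: "\<eta> > 0" and xi: "2 / \<eta> \<le> \<bar>\<xi>\<bar>"
  shows "ennreal \<eta> \<le> (\<integral>\<^sup>+y. indicator {0..\<eta>} y * ennreal ((norm (exp (\<i> * complex_of_real (y * \<xi>)) - 1))\<^sup>2) \<partial>lborel)"
proof -
  have xi0: "\<xi> \<noteq> 0" using xi eta by (auto simp: field_simps)
  have hi: "((\<lambda>y. 2 - 2 * cos (y * \<xi>)) has_integral ((2 * \<eta> - 2 * sin (\<eta> * \<xi>) / \<xi>) - (2 * 0 - 2 * sin (0 * \<xi>) / \<xi>))) {0..\<eta>}"
  proof (rule fundamental_theorem_of_calculus)
    show "0 \<le> \<eta>" using eta by simp
    fix y assume "y \<in> {0..\<eta>}"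
    have "((\<lambda>y. 2 * y - 2 * sin (y * \<xi>) / \<xi>) has_real_derivative (2 - 2 * cos (y * \<xi>))) (at y within {0..\<eta>})"
      using xi0 by (auto intro!: derivative_eq_intros simp: field_simps)
    then show "((\<lambda>y. 2 * y - 2 * sin (y * \<xi>) / \<xi>) has_vector_derivative (2 - 2 * cos (y * \<xi>))) (at y within {0..\<eta>})"
      by (simp add: has_real_derivative_iff_has_vector_derivative)
  qed
  have "(\<integral>\<^sup>+y. indicator {0..\<eta>} y * ennreal ((norm (exp (\<i> * complex_of_real (y * \<xi>)) - 1))\<^sup>2) \<partial>lborel)
      = (\<integral>\<^sup>+y. ennreal (indicator {0..\<eta>} y * (2 - 2 * cos (y * \<xi>))) \<partial>lborel)"
  proof (intro nn_integral_cong)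
    fix y
    show "indicator {0..\<eta>} y * ennreal ((norm (exp (\<i> * complex_of_real (y * \<xi>)) - 1))\<^sup>2) = ennreal (indicator {0..\<eta>} y * (2 - 2 * cos (y * \<xi>)))"
      by (simp only: norm_eim1_sq[of "y * \<xi>"]) (simp split: split_indicator)
  qed
  also have "\<dots> = ennreal ((2 * \<eta> - 2 * sin (\<eta> * \<xi>) / \<xi>) - (2 * 0 - 2 * sin (0 * \<xi>) / \<xi>))"
    by (rule nn_integral_has_integral_lebesgue[OF _ hi]) (simp add: cos_le_one)
  finally have eq: "(\<integral>\<^sup>+y. indicator {0..\<eta>} y * ennreal ((norm (exp (\<i> * complex_of_real (y * \<xi>)) - 1))\<^sup>2) \<partial>lborel)
      = ennreal (2 * \<eta> - 2 * sin (\<eta> * \<xi>) / \<xi>)" by simp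
  have "sin (\<eta> * \<xi>) / \<xi> \<le> 1 / \<bar>\<xi>\<bar>"
  proof -
    have "sin (\<eta> * \<xi>) / \<xi> \<le> \<bar>sin (\<eta> * \<xi>) / \<xi>\<bar>" by (rule abs_ge_self)
    also have "\<dots> = \<bar>sin (\<eta> * \<xi>)\<bar> / \<bar>\<xi>\<bar>" by (simp add: abs_divide)
    also have "\<dots> \<le> 1 / \<bar>\<xi>\<bar>" by (intro divide_right_mono abs_sin_le_one) simp
    finally show ?thesis .
  qed
  moreover have "1 / \<bar>\<xi>\<bar> \<le> \<eta> / 2" using xi eta xi0 by (simp add: field_simps)
  ultimately have "\<eta> \<le> 2 * \<eta> - 2 * sin (\<eta> * \<xi>) / \<xi>" by linarith
  then show ?thesis unfolding eq by (rule ennreal_leI)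
qed

lemma fourier_meas[measurable]:
  assumes [measurable]: "f \<in> borel_measurable borel"
  shows "fourier f \<in> borel_measurable borel"
proof -
  have "fourier f = (\<lambda>\<xi>. complex_of_real (1 / sqrt (2 * pi)) * FT f \<xi>)"
    by (rule ext) (rule fourier_FT)
  then show ?thesis by simp
qed

lemma high_freq:
  fixes f :: "real \<Rightarrow> complex"
  assumes fm[measurable]: "f \<in> borel_measurable borel" and fi: "integrable lborel f" and eta: "\<eta> > 0"
    and B: "\<And>y. y \<in> {0..\<eta>} \<Longrightarrow> (\<integral>\<^sup>+x. ennreal ((norm (f (x + y) - f x))\<^sup>2) \<partial>lborel) \<le> B"
  shows "(\<integral>\<^sup>+\<xi>. indicator {\<xi>. 2 / \<eta> \<le> \<bar>\<xi>\<bar>} \<xi> * ennreal ((norm (fourier f \<xi>))\<^sup>2) \<partial>lborel) \<le> B"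
proof -
  define E where "E y \<xi> = ennreal ((norm (exp (\<i> * complex_of_real (y * \<xi>)) - 1))\<^sup>2)" for y \<xi>
  have Em[measurable]: "case_prod E \<in> borel_measurable (lborel \<Otimes>\<^sub>M lborel)" unfolding E_def by measurable
  have c1: "ennreal (1 / \<eta>) * ennreal \<eta> = 1"
    using eta by (subst ennreal_mult[symmetric]) auto
  have step1: "indicator {\<xi>. 2 / \<eta> \<le> \<bar>\<xi>\<bar>} \<xi> * ennreal ((norm (fourier f \<xi>))\<^sup>2)
      \<le> ennreal (1 / \<eta>) * (\<integral>\<^sup>+y. indicator {0..\<eta>} y * E y \<xi> * ennreal ((norm (fourier f \<xi>))\<^sup>2) \<partial>lborel)" for \<xi>
  proof (cases "2 / \<eta> \<le> \<bar>\<xi>\<bar>")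
    case True
    have "ennreal ((norm (fourier f \<xi>))\<^sup>2) = ennreal (1 / \<eta>) * ennreal \<eta> * ennreal ((norm (fourier f \<xi>))\<^sup>2)"
      by (simp only: c1 mult_1_left)
    also have "\<dots> \<le> ennreal (1 / \<eta>) * (\<integral>\<^sup>+y. indicator {0..\<eta>} y * E y \<xi> \<partial>lborel) * ennreal ((norm (fourier f \<xi>))\<^sup>2)"
      by (intro mult_right_mono mult_left_mono avg_lower[OF eta True, folded E_def]) auto
    also have "\<dots> = ennreal (1 / \<eta>) * (\<integral>\<^sup>+y. indicator {0..\<eta>} y * E y \<xi> * ennreal ((norm (fourier f \<xi>))\<^sup>2) \<partial>lborel)"
    proof -
      have m: "(\<integral>\<^sup>+y. indicator {0..\<eta>} y * E y \<xi> \<partial>lborel) * ennreal ((norm (fourier f \<xi>))\<^sup>2) = (\<integral>\<^sup>+y. indicator {0..\<eta>} y * E y \<xi> * ennreal ((norm (fourier f \<xi>))\<^sup>2) \<partial>lborel)"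
        by (rule nn_integral_multc[symmetric]) measurable
      show ?thesis unfolding m[symmetric] by (rule mult.assoc)
    qed
    finally show ?thesis using True by simp
  qed simp
  have "(\<integral>\<^sup>+\<xi>. indicator {\<xi>. 2 / \<eta> \<le> \<bar>\<xi>\<bar>} \<xi> * ennreal ((norm (fourier f \<xi>))\<^sup>2) \<partial>lborel)
      \<le> (\<integral>\<^sup>+\<xi>. ennreal (1 / \<eta>) * (\<integral>\<^sup>+y. indicator {0..\<eta>} y * E y \<xi> * ennreal ((norm (fourier f \<xi>))\<^sup>2) \<partial>lborel) \<partial>lborel)"
    by (intro nn_integral_mono step1)
  also have "\<dots> = ennreal (1 / \<eta>) * (\<integral>\<^sup>+\<xi>. \<integral>\<^sup>+y. indicator {0..\<eta>} y * E y \<xi> * ennreal ((norm (fourier f \<xi>))\<^sup>2) \<partial>lborel \<partial>lborel)"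
    by (rule nn_integral_cmult) measurable
  finally have X1: "(\<integral>\<^sup>+\<xi>. indicator {\<xi>. 2 / \<eta> \<le> \<bar>\<xi>\<bar>} \<xi> * ennreal ((norm (fourier f \<xi>))\<^sup>2) \<partial>lborel)
      \<le> ennreal (1 / \<eta>) * (\<integral>\<^sup>+\<xi>. \<integral>\<^sup>+y. indicator {0..\<eta>} y * E y \<xi> * ennreal ((norm (fourier f \<xi>))\<^sup>2) \<partial>lborel \<partial>lborel)" .
  have "(\<integral>\<^sup>+\<xi>. \<integral>\<^sup>+y. indicator {0..\<eta>} y * E y \<xi> * ennreal ((norm (fourier f \<xi>))\<^sup>2) \<partial>lborel \<partial>lborel)
      = (\<integral>\<^sup>+y. \<integral>\<^sup>+\<xi>. indicator {0..\<eta>} y * E y \<xi> * ennreal ((norm (fourier f \<xi>))\<^sup>2) \<partial>lborel \<partial>lborel)"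
    by (rule lborel_pair.Fubini') measurable
  also have "\<dots> = (\<integral>\<^sup>+y. indicator {0..\<eta>} y * (\<integral>\<^sup>+\<xi>. ennreal ((norm (fourier (\<lambda>x. f (x + y) - f x) \<xi>))\<^sup>2) \<partial>lborel) \<partial>lborel)"
  proof (intro nn_integral_cong)
    fix y
    have "E y \<xi> * ennreal ((norm (fourier f \<xi>))\<^sup>2) = ennreal ((norm (fourier (\<lambda>x. f (x + y) - f x) \<xi>))\<^sup>2)" for \<xi>
      unfolding E_def fourier_shift_diff[OF fi]
      by (simp add: ennreal_mult[symmetric] norm_mult power_mult_distrib)
    then show "(\<integral>\<^sup>+\<xi>. indicator {0..\<eta>} y * E y \<xi> * ennreal ((norm (fourier f \<xi>))\<^sup>2) \<partial>lborel)
        = indicator {0..\<eta>} y * (\<integral>\<^sup>+\<xi>. ennreal ((norm (fourier (\<lambda>x. f (x + y) - f x) \<xi>))\<^sup>2) \<partial>lborel)"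
      by (simp add: mult.assoc nn_integral_cmult)
  qed
  also have "\<dots> \<le> (\<integral>\<^sup>+y. B * indicator {0..\<eta>} y \<partial>lborel)"
  proof (intro nn_integral_mono)
    fix y
    show "indicator {0..\<eta>} y * (\<integral>\<^sup>+\<xi>. ennreal ((norm (fourier (\<lambda>x. f (x + y) - f x) \<xi>))\<^sup>2) \<partial>lborel) \<le> B * indicator {0..\<eta>} y"
    proof (cases "y \<in> {0..\<eta>}")
      case True
      have "(\<integral>\<^sup>+\<xi>. ennreal ((norm (fourier (\<lambda>x. f (x + y) - f x) \<xi>))\<^sup>2) \<partial>lborel) \<le> (\<integral>\<^sup>+x. ennreal ((norm (f (x + y) - f x))\<^sup>2) \<partial>lborel)"
        by (rule plancherel_fourier) (use fi integrable_shift in auto)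
      also have "\<dots> \<le> B" by (rule B[OF True])
      finally show ?thesis using True by simp
    qed simp
  qed
  also have "\<dots> = B * ennreal \<eta>"
    using eta by (subst nn_integral_cmult_indicator) auto
  finally have X2: "(\<integral>\<^sup>+\<xi>. \<integral>\<^sup>+y. indicator {0..\<eta>} y * E y \<xi> * ennreal ((norm (fourier f \<xi>))\<^sup>2) \<partial>lborel \<partial>lborel) \<le> B * ennreal \<eta>" .
  have "(\<integral>\<^sup>+\<xi>. indicator {\<xi>. 2 / \<eta> \<le> \<bar>\<xi>\<bar>} \<xi> * ennreal ((norm (fourier f \<xi>))\<^sup>2) \<partial>lborel) \<le> ennreal (1 / \<eta>) * (B * ennreal \<eta>)"
    by (rule order_trans[OF X1 mult_left_mono[OF X2]]) simp
  also have "ennreal (1 / \<eta>) * (B * ennreal \<eta>) = B"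
  proof -
    have "ennreal (1 / \<eta>) * (B * ennreal \<eta>) = (ennreal (1 / \<eta>) * ennreal \<eta>) * B"
      by (simp only: ac_simps)
    then show ?thesis by (simp only: c1 mult_1_left)
  qed
  finally show ?thesis .
qed

lemma cauchy_at_top_conv:
  fixes J :: "real \<Rightarrow> real"
  assumes C: "\<And>e. e > 0 \<Longrightarrow> \<exists>r. \<forall>R\<ge>r. \<forall>R'\<ge>r. \<bar>J R - J R'\<bar> < e"
  shows "\<exists>L. (J \<longlongrightarrow> L) at_top"
proof -
  define u where "u n = J (real n)" for n
  have "Cauchy u"
  proof (rule metric_CauchyI)
    fix e :: real assume e: "e > 0"
    obtain r where r: "\<forall>R\<ge>r. \<forall>R'\<ge>r. \<bar>J R - J R'\<bar> < e" using C[OF e] by blast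
    obtain M :: nat where M: "real M \<ge> r" using real_arch_simple by blast
    show "\<exists>M. \<forall>m\<ge>M. \<forall>n\<ge>M. dist (u m) (u n) < e"
    proof (intro exI allI impI)
      fix m n assume "M \<le> m" "M \<le> n"
      then have "real m \<ge> r" "real n \<ge> r" using M by auto
      then show "dist (u m) (u n) < e" using r unfolding u_def dist_real_def by blast
    qed
  qed
  then obtain L where L: "u \<longlonglongrightarrow> L" using Cauchy_convergent_iff convergent_def by blast
  have "(J \<longlongrightarrow> L) at_top"
  proof (rule tendstoI)
    fix e :: real assume e: "e > 0"
    obtain r where r: "\<forall>R\<ge>r. \<forall>R'\<ge>r. \<bar>J R - J R'\<bar> < e / 2" using C[of "e/2"] e by auto
    from L e obtain N where N: "\<forall>n\<ge>N. dist (u n) L < e / 2"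
      unfolding lim_sequentially by (meson half_gt_zero)
    show "\<forall>\<^sub>F R in at_top. dist (J R) L < e"
      unfolding eventually_at_top_linorder
    proof (intro exI allI impI)
      fix R assume R: "R \<ge> r"
      obtain n :: nat where n: "real n \<ge> max R (real N)" using real_arch_simple by blast
      have "\<bar>J R - J (real n)\<bar> < e / 2" using r R n by auto
      moreover have "dist (u n) L < e / 2" using N n by auto
      ultimately show "dist (J R) L < e" unfolding u_def dist_real_def by linarith
    qed
  qed
  then show ?thesis ..
qed

lemma trunc_meas[measurable]:
  assumes [measurable]: "q \<in> borel_measurable borel"
  shows "trunc R q \<in> borel_measurable borel"
  unfolding trunc_def by measurable

lemma trunc_int:
  assumes qm[measurable]: "q \<in> borel_measurable borel" and q2: "integrable lborel (\<lambda>x. (norm (q x))\<^sup>2)"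
  shows "integrable lborel (trunc R q)"
proof (rule Bochner_Integration.integrable_bound[where f="\<lambda>x. indicator {-R..R} x + (norm (q x))\<^sup>2"])
  show "integrable lborel (\<lambda>x. indicator {-R..R} x + (norm (q x))\<^sup>2 :: real)"
    using q2 emeasure_lborel_cbox_finite[of "-R" R]
    by (intro Bochner_Integration.integrable_add integrable_real_indicator) auto
  show "AE x in lborel. norm (trunc R q x) \<le> norm (indicator {-R..R} x + (norm (q x))\<^sup>2 :: real)"
  proof (rule AE_I2)
    fix x
    have a: "norm (q x) \<le> 1 + (norm (q x))\<^sup>2"
    proof (cases "norm (q x) \<le> 1")
      case True
      have "0 \<le> (norm (q x))\<^sup>2" by simp
      then show ?thesis using True by linarith
    next
      case False
      have "norm (q x) * 1 \<le> norm (q x) * norm (q x)" using False by (intro mult_left_mono) auto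
      then show ?thesis by (simp add: power2_eq_square)
    qed
    show "norm (trunc R q x) \<le> norm (indicator {-R..R} x + (norm (q x))\<^sup>2 :: real)"
      using a unfolding trunc_def by (auto split: split_indicator)
  qed
qed simp

definition Tl :: "(real \<Rightarrow> complex) \<Rightarrow> real \<Rightarrow> real" where
  "Tl q r = (LINT x|lborel. indicator {x. r < \<bar>x\<bar>} x * (norm (q x))\<^sup>2)"

lemma Tl_tendsto:
  assumes qm[measurable]: "q \<in> borel_measurable borel" and q2: "integrable lborel (\<lambda>x. (norm (q x))\<^sup>2)"
  shows "(Tl q \<longlongrightarrow> 0) at_top"
proof -
  have "((\<lambda>r. LINT x|lborel. indicator {x. r < \<bar>x\<bar>} x * (norm (q x))\<^sup>2) \<longlongrightarrow> (LINT (x::real)|lborel. (0::real))) at_top"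
  proof (rule integral_dominated_convergence_at_top[where w="\<lambda>x. (norm (q x))\<^sup>2" and s="\<lambda>r x. indicator {x. r < \<bar>x\<bar>} x * (norm (q x))\<^sup>2" and f="\<lambda>x. 0" and M=lborel])
    show "AE x in lborel. ((\<lambda>r. indicator {x. r < \<bar>x\<bar>} x * (norm (q x))\<^sup>2) \<longlongrightarrow> 0) at_top"
    proof (rule AE_I2)
      fix x
      have "\<forall>\<^sub>F r in at_top. indicator {x. r < \<bar>x\<bar>} x * (norm (q x))\<^sup>2 = (0::real)"
        unfolding eventually_at_top_linorder by (rule exI[of _ "\<bar>x\<bar>"]) (auto split: split_indicator)
      then show "((\<lambda>r. indicator {x. r < \<bar>x\<bar>} x * (norm (q x))\<^sup>2) \<longlongrightarrow> 0) at_top"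
        by (rule tendsto_eventually)
    qed
    show "\<forall>\<^sub>F r in at_top. AE x in lborel. norm (indicator {x. r < \<bar>x\<bar>} x * (norm (q x))\<^sup>2) \<le> (norm (q x))\<^sup>2"
      by (intro always_eventually allI AE_I2) (auto split: split_indicator)
  qed (use q2 in auto)
  then show ?thesis unfolding Tl_def by simp
qed

lemma Tl_nn:
  assumes qm[measurable]: "q \<in> borel_measurable borel" and q2: "integrable lborel (\<lambda>x. (norm (q x))\<^sup>2)"
  shows "(\<integral>\<^sup>+x. ennreal (indicator {x. r < \<bar>x\<bar>} x * (norm (q x))\<^sup>2) \<partial>lborel) = ennreal (Tl q r)"
  unfolding Tl_def
  by (intro nn_integral_eq_integral AE_I2 integrable_mult_indicator[where 'b=real, simplified] q2) auto

lemma trunc_diff_sq: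
  assumes "r \<le> R" "r \<le> R'"
  shows "(norm (trunc R q x - trunc R' q x))\<^sup>2 \<le> indicator {x. r < \<bar>x\<bar>} x * (norm (q x))\<^sup>2"
  using assms unfolding trunc_def by (auto split: split_indicator)

lemma trunc_q_sq:
  shows "(norm (trunc R q x - q x))\<^sup>2 \<le> indicator {x. R < \<bar>x\<bar>} x * (norm (q x))\<^sup>2"
  unfolding trunc_def by (auto split: split_indicator)

lemma trunc_le: "norm (trunc R q x) \<le> norm (q x)"
  unfolding trunc_def by auto

lemma key_ineq:
  fixes a b :: complex and w t :: real
  assumes w0: "0 \<le> w" and w1: "w \<le> 1" and t: "t > 0"
  shows "\<bar>w * (norm a)\<^sup>2 - w * (norm b)\<^sup>2\<bar> \<le> (norm (a - b))\<^sup>2 / (2 * t) + t * ((norm a)\<^sup>2 + (norm b)\<^sup>2)"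
proof -
  define A where "A = norm a"
  define B where "B = norm b"
  define D where "D = norm (a - b)"
  have A0: "0 \<le> A" and B0: "0 \<le> B" and D0: "0 \<le> D" unfolding A_def B_def D_def by auto
  have AB: "\<bar>A - B\<bar> \<le> D" unfolding A_def B_def D_def by (rule norm_triangle_ineq3)
  have "\<bar>w * A\<^sup>2 - w * B\<^sup>2\<bar> = w * (\<bar>A - B\<bar> * (A + B))"
  proof -
    have "w * A\<^sup>2 - w * B\<^sup>2 = w * ((A - B) * (A + B))" by (simp add: power2_eq_square algebra_simps)
    then have "\<bar>w * A\<^sup>2 - w * B\<^sup>2\<bar> = \<bar>w\<bar> * (\<bar>A - B\<bar> * \<bar>A + B\<bar>)" by (simp only: abs_mult)
    then show ?thesis using w0 A0 B0 by simp
  qed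
  also have "\<dots> \<le> 1 * (\<bar>A - B\<bar> * (A + B))"
    using w1 A0 B0 by (intro mult_right_mono) auto
  also have "\<dots> \<le> D * (A + B)"
    using AB A0 B0 by (simp add: mult_right_mono)
  also have "\<dots> \<le> D\<^sup>2 / (2 * t) + t * (A + B)\<^sup>2 / 2"
  proof -
    have "0 \<le> (D - t * (A + B))\<^sup>2 / (2 * t)" using t by simp
    also have "(D - t * (A + B))\<^sup>2 / (2 * t) = D\<^sup>2 / (2 * t) + t * (A + B)\<^sup>2 / 2 - D * (A + B)"
      using t by (simp add: power2_eq_square field_simps)
    finally show ?thesis by simp
  qed
  also have "\<dots> \<le> D\<^sup>2 / (2 * t) + t * (A\<^sup>2 + B\<^sup>2)"
  proof -
    have "(A + B)\<^sup>2 \<le> 2 * (A\<^sup>2 + B\<^sup>2)"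
      using zero_le_power2[of "A - B"] by (simp add: power2_eq_square algebra_simps)
    then have "t * (A + B)\<^sup>2 \<le> t * (2 * (A\<^sup>2 + B\<^sup>2))" using t by (intro mult_left_mono) auto
    moreover have "t * (2 * (A\<^sup>2 + B\<^sup>2)) = 2 * (t * (A\<^sup>2 + B\<^sup>2))" by (simp only: mult_ac)
    ultimately show ?thesis by linarith
  qed
  finally show ?thesis unfolding A_def B_def D_def .
qed

lemma nn_cmult_real:
  assumes "0 \<le> c" "f \<in> borel_measurable M" "\<And>x. 0 \<le> f x"
  shows "(\<integral>\<^sup>+x. ennreal (c * f x) \<partial>M) = ennreal c * (\<integral>\<^sup>+x. ennreal (f x) \<partial>M)"
proof -
  have "(\<integral>\<^sup>+x. ennreal (c * f x) \<partial>M) = (\<integral>\<^sup>+x. ennreal c * ennreal (f x) \<partial>M)"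
    using assms by (intro nn_integral_cong ennreal_mult) auto
  also have "\<dots> = ennreal c * (\<integral>\<^sup>+x. ennreal (f x) \<partial>M)"
    using assms(2) by (intro nn_integral_cmult) auto
  finally show ?thesis .
qed

locale qsetup =
  fixes q :: "real \<Rightarrow> complex" and w :: "real \<Rightarrow> real"
  assumes qm[measurable]: "q \<in> borel_measurable borel"
    and q2: "integrable lborel (\<lambda>x. (norm (q x))\<^sup>2)"
    and wm[measurable]: "w \<in> borel_measurable borel"
    and w0: "\<And>\<xi>. 0 \<le> w \<xi>" and w1: "\<And>\<xi>. w \<xi> \<le> 1"
begin

definition Q2 where "Q2 = (LINT x|lborel. (norm (q x))\<^sup>2)"
definition J where "J R = (LINT \<xi>|lborel. w \<xi> * (norm (fourier (trunc R q) \<xi>))\<^sup>2)"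

lemma Q2_nn: "(\<integral>\<^sup>+x. ennreal ((norm (q x))\<^sup>2) \<partial>lborel) = ennreal Q2"
  unfolding Q2_def by (intro nn_integral_eq_integral q2) auto

lemma Q2_nonneg: "0 \<le> Q2"
  unfolding Q2_def by simp

lemma nn_ft: "(\<integral>\<^sup>+\<xi>. ennreal ((norm (fourier (trunc R q) \<xi>))\<^sup>2) \<partial>lborel) \<le> ennreal Q2"
proof -
  have "(\<integral>\<^sup>+\<xi>. ennreal ((norm (fourier (trunc R q) \<xi>))\<^sup>2) \<partial>lborel) \<le> (\<integral>\<^sup>+x. ennreal ((norm (trunc R q x))\<^sup>2) \<partial>lborel)"
    by (rule plancherel_fourier) (auto intro: trunc_int q2 qm)
  also have "\<dots> \<le> (\<integral>\<^sup>+x. ennreal ((norm (q x))\<^sup>2) \<partial>lborel)"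
    by (intro nn_integral_mono ennreal_leI power_mono trunc_le) auto
  finally show ?thesis unfolding Q2_nn .
qed

lemma nn_ft_diff:
  assumes "r \<le> R" "r \<le> R'"
  shows "(\<integral>\<^sup>+\<xi>. ennreal ((norm (fourier (trunc R q) \<xi> - fourier (trunc R' q) \<xi>))\<^sup>2) \<partial>lborel) \<le> ennreal (Tl q r)"
proof -
  have "(\<integral>\<^sup>+\<xi>. ennreal ((norm (fourier (trunc R q) \<xi> - fourier (trunc R' q) \<xi>))\<^sup>2) \<partial>lborel)
      = (\<integral>\<^sup>+\<xi>. ennreal ((norm (fourier (\<lambda>x. trunc R q x - trunc R' q x) \<xi>))\<^sup>2) \<partial>lborel)"
    using fourier_diff[OF trunc_int[OF qm q2, of R] trunc_int[OF qm q2, of R']] by simp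
  also have "\<dots> \<le> (\<integral>\<^sup>+x. ennreal ((norm (trunc R q x - trunc R' q x))\<^sup>2) \<partial>lborel)"
    by (rule plancherel_fourier) (auto intro: Bochner_Integration.integrable_diff trunc_int q2 qm)
  also have "\<dots> \<le> (\<integral>\<^sup>+x. ennreal (indicator {x. r < \<bar>x\<bar>} x * (norm (q x))\<^sup>2) \<partial>lborel)"
    by (intro nn_integral_mono ennreal_leI trunc_diff_sq assms)
  finally show ?thesis unfolding Tl_nn[OF qm q2] .
qed

lemma J_int: "integrable lborel (\<lambda>\<xi>. w \<xi> * (norm (fourier (trunc R q) \<xi>))\<^sup>2)"
proof (rule integrableI_nonneg)
  show "AE \<xi> in lborel. 0 \<le> w \<xi> * (norm (fourier (trunc R q) \<xi>))\<^sup>2" using w0 by simp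
  have "(\<integral>\<^sup>+\<xi>. ennreal (w \<xi> * (norm (fourier (trunc R q) \<xi>))\<^sup>2) \<partial>lborel) \<le> (\<integral>\<^sup>+\<xi>. ennreal ((norm (fourier (trunc R q) \<xi>))\<^sup>2) \<partial>lborel)"
    using w0 w1 by (intro nn_integral_mono ennreal_leI) (simp add: mult_left_le_one_le)
  also have "\<dots> \<le> ennreal Q2" by (rule nn_ft)
  finally show "(\<integral>\<^sup>+\<xi>. ennreal (w \<xi> * (norm (fourier (trunc R q) \<xi>))\<^sup>2) \<partial>lborel) < \<infinity>"
    by (simp add: le_less_trans)
qed simp

lemma Tl_nonneg: "0 \<le> Tl q r"
  unfolding Tl_def by simp

lemma J_diff:
  assumes rR: "r \<le> R" and rR': "r \<le> R'" and t: "t > 0"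
  shows "\<bar>J R - J R'\<bar> \<le> Tl q r / (2 * t) + 2 * t * Q2"
proof -
  define a where "a = fourier (trunc R q)"
  define b where "b = fourier (trunc R' q)"
  have am[measurable]: "a \<in> borel_measurable borel" unfolding a_def by measurable
  have bm[measurable]: "b \<in> borel_measurable borel" unfolding b_def by measurable
  have "J R - J R' = (LINT \<xi>|lborel. w \<xi> * (norm (a \<xi>))\<^sup>2 - w \<xi> * (norm (b \<xi>))\<^sup>2)"
    unfolding J_def a_def b_def by (rule Bochner_Integration.integral_diff[symmetric]) (rule J_int)+
  then have "ennreal \<bar>J R - J R'\<bar> \<le> (\<integral>\<^sup>+\<xi>. ennreal (norm (w \<xi> * (norm (a \<xi>))\<^sup>2 - w \<xi> * (norm (b \<xi>))\<^sup>2)) \<partial>lborel)"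
    using norm_integral_le_nn[of lborel "\<lambda>\<xi>. w \<xi> * (norm (a \<xi>))\<^sup>2 - w \<xi> * (norm (b \<xi>))\<^sup>2"] by simp
  also have "\<dots> \<le> (\<integral>\<^sup>+\<xi>. ennreal ((1 / (2 * t)) * (norm (a \<xi> - b \<xi>))\<^sup>2) + (ennreal (t * (norm (a \<xi>))\<^sup>2) + ennreal (t * (norm (b \<xi>))\<^sup>2)) \<partial>lborel)"
  proof (intro nn_integral_mono)
    fix \<xi>
    have "norm (w \<xi> * (norm (a \<xi>))\<^sup>2 - w \<xi> * (norm (b \<xi>))\<^sup>2) \<le> (norm (a \<xi> - b \<xi>))\<^sup>2 / (2 * t) + t * ((norm (a \<xi>))\<^sup>2 + (norm (b \<xi>))\<^sup>2)"
      using key_ineq[OF w0 w1 t] by simp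
    also have "\<dots> = (1 / (2 * t)) * (norm (a \<xi> - b \<xi>))\<^sup>2 + (t * (norm (a \<xi>))\<^sup>2 + t * (norm (b \<xi>))\<^sup>2)"
      by (simp add: algebra_simps)
    finally have "ennreal (norm (w \<xi> * (norm (a \<xi>))\<^sup>2 - w \<xi> * (norm (b \<xi>))\<^sup>2)) \<le> ennreal ((1 / (2 * t)) * (norm (a \<xi> - b \<xi>))\<^sup>2 + (t * (norm (a \<xi>))\<^sup>2 + t * (norm (b \<xi>))\<^sup>2))"
      by (rule ennreal_leI)
    also have "\<dots> = ennreal ((1 / (2 * t)) * (norm (a \<xi> - b \<xi>))\<^sup>2) + (ennreal (t * (norm (a \<xi>))\<^sup>2) + ennreal (t * (norm (b \<xi>))\<^sup>2))"
      using t by (simp add: ennreal_plus)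
    finally show "ennreal (norm (w \<xi> * (norm (a \<xi>))\<^sup>2 - w \<xi> * (norm (b \<xi>))\<^sup>2)) \<le> ennreal ((1 / (2 * t)) * (norm (a \<xi> - b \<xi>))\<^sup>2) + (ennreal (t * (norm (a \<xi>))\<^sup>2) + ennreal (t * (norm (b \<xi>))\<^sup>2))" .
  qed
  also have "\<dots> = (\<integral>\<^sup>+\<xi>. ennreal ((1 / (2 * t)) * (norm (a \<xi> - b \<xi>))\<^sup>2) \<partial>lborel) + ((\<integral>\<^sup>+\<xi>. ennreal (t * (norm (a \<xi>))\<^sup>2) \<partial>lborel) + (\<integral>\<^sup>+\<xi>. ennreal (t * (norm (b \<xi>))\<^sup>2) \<partial>lborel))"
  proof -
    have e1: "(\<integral>\<^sup>+\<xi>. ennreal (t * (norm (a \<xi>))\<^sup>2) + ennreal (t * (norm (b \<xi>))\<^sup>2) \<partial>lborel) = (\<integral>\<^sup>+\<xi>. ennreal (t * (norm (a \<xi>))\<^sup>2) \<partial>lborel) + (\<integral>\<^sup>+\<xi>. ennreal (t * (norm (b \<xi>))\<^sup>2) \<partial>lborel)"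
      by (rule nn_integral_add) measurable
    have e2: "(\<integral>\<^sup>+\<xi>. ennreal ((1 / (2 * t)) * (norm (a \<xi> - b \<xi>))\<^sup>2) + (ennreal (t * (norm (a \<xi>))\<^sup>2) + ennreal (t * (norm (b \<xi>))\<^sup>2)) \<partial>lborel)
      = (\<integral>\<^sup>+\<xi>. ennreal ((1 / (2 * t)) * (norm (a \<xi> - b \<xi>))\<^sup>2) \<partial>lborel) + (\<integral>\<^sup>+\<xi>. ennreal (t * (norm (a \<xi>))\<^sup>2) + ennreal (t * (norm (b \<xi>))\<^sup>2) \<partial>lborel)"
      by (rule nn_integral_add) measurable
    show ?thesis unfolding e2 e1 ..
  qed
  also have "\<dots> = ennreal (1 / (2 * t)) * (\<integral>\<^sup>+\<xi>. ennreal ((norm (a \<xi> - b \<xi>))\<^sup>2) \<partial>lborel) + (ennreal t * (\<integral>\<^sup>+\<xi>. ennreal ((norm (a \<xi>))\<^sup>2) \<partial>lborel) + ennreal t * (\<integral>\<^sup>+\<xi>. ennreal ((norm (b \<xi>))\<^sup>2) \<partial>lborel))"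
  proof -
    have c1: "(\<integral>\<^sup>+\<xi>. ennreal ((1 / (2 * t)) * (norm (a \<xi> - b \<xi>))\<^sup>2) \<partial>lborel) = ennreal (1 / (2 * t)) * (\<integral>\<^sup>+\<xi>. ennreal ((norm (a \<xi> - b \<xi>))\<^sup>2) \<partial>lborel)"
      by (rule nn_cmult_real) (use t in auto)
    have c2: "(\<integral>\<^sup>+\<xi>. ennreal (t * (norm (a \<xi>))\<^sup>2) \<partial>lborel) = ennreal t * (\<integral>\<^sup>+\<xi>. ennreal ((norm (a \<xi>))\<^sup>2) \<partial>lborel)"
      by (rule nn_cmult_real) (use t in auto)
    have c3: "(\<integral>\<^sup>+\<xi>. ennreal (t * (norm (b \<xi>))\<^sup>2) \<partial>lborel) = ennreal t * (\<integral>\<^sup>+\<xi>. ennreal ((norm (b \<xi>))\<^sup>2) \<partial>lborel)"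
      by (rule nn_cmult_real) (use t in auto)
    show ?thesis unfolding c1 c2 c3 ..
  qed
  also have "\<dots> \<le> ennreal (1 / (2 * t)) * ennreal (Tl q r) + (ennreal t * ennreal Q2 + ennreal t * ennreal Q2)"
    unfolding a_def b_def
    by (intro add_mono mult_left_mono nn_ft nn_ft_diff rR rR') auto
  also have "\<dots> = ennreal (Tl q r / (2 * t) + 2 * t * Q2)"
    using t Tl_nonneg Q2_nonneg by (simp add: ennreal_mult[symmetric] ennreal_plus[symmetric] del: ennreal_plus)
  finally show ?thesis
    using t Tl_nonneg Q2_nonneg by (subst (asm) ennreal_le_iff) auto
qed

lemma J_conv: "\<exists>L. (J \<longlongrightarrow> L) at_top"
proof (rule cauchy_at_top_conv)
  fix e :: real assume e: "e > 0"
  define t where "t = e / (4 * (Q2 + 1))"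
  have t: "t > 0" unfolding t_def using e Q2_nonneg by simp
  have tQ: "2 * t * Q2 < e / 2"
  proof -
    have "2 * t * Q2 = e / 2 * (Q2 / (Q2 + 1))" unfolding t_def using Q2_nonneg by (simp add: field_simps)
    also have "\<dots> < e / 2 * 1" using e Q2_nonneg by (intro mult_strict_left_mono) auto
    finally show ?thesis by simp
  qed
  have "\<forall>\<^sub>F r in at_top. Tl q r < e * t"
    using Tl_tendsto[OF qm q2] e t by (intro order_tendstoD(2)) auto
  then obtain r where r: "\<And>r'. r' \<ge> r \<Longrightarrow> Tl q r' < e * t" unfolding eventually_at_top_linorder by blast
  show "\<exists>r. \<forall>R\<ge>r. \<forall>R'\<ge>r. \<bar>J R - J R'\<bar> < e"
  proof (intro exI allI impI)
    fix R R' assume R: "r \<le> R" and R': "r \<le> R'"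
    have "\<bar>J R - J R'\<bar> \<le> Tl q r / (2 * t) + 2 * t * Q2" by (rule J_diff[OF R R' t])
    moreover have "Tl q r / (2 * t) < e / 2"
      using r[of r] t by (simp add: field_simps)
    ultimately show "\<bar>J R - J R'\<bar> < e" using tQ by linarith
  qed
qed

end

lemma norm3_sq:
  fixes u v z :: complex
  shows "(norm (u + v + z))\<^sup>2 \<le> 3 * (norm u)\<^sup>2 + 3 * (norm v)\<^sup>2 + 3 * (norm z)\<^sup>2"
proof -
  have "norm (u + v + z) \<le> norm u + norm v + norm z"
    by (metis norm_triangle_ineq add_right_mono order_trans)
  then have "(norm (u + v + z))\<^sup>2 \<le> (norm u + norm v + norm z)\<^sup>2"
    by (intro power_mono) auto
  also have "\<dots> \<le> 3 * (norm u)\<^sup>2 + 3 * (norm v)\<^sup>2 + 3 * (norm z)\<^sup>2"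
    using zero_le_power2[of "norm u - norm v"] zero_le_power2[of "norm v - norm z"] zero_le_power2[of "norm u - norm z"]
    by (simp add: power2_eq_square algebra_simps)
  finally show ?thesis .
qed

context qsetup
begin

lemma shift_bound:
  assumes B: "(\<integral>\<^sup>+x. ennreal ((norm (q (x + y) - q x))\<^sup>2) \<partial>lborel) \<le> ennreal B" and B0: "0 \<le> B"
  shows "(\<integral>\<^sup>+x. ennreal ((norm (trunc R q (x + y) - trunc R q x))\<^sup>2) \<partial>lborel) \<le> ennreal (3 * B + 6 * Tl q R)"
proof -
  define g where "g x = trunc R q x - q x" for x
  have gm[measurable]: "g \<in> borel_measurable borel" unfolding g_def by measurable
  have gT: "(\<integral>\<^sup>+x. ennreal ((norm (g x))\<^sup>2) \<partial>lborel) \<le> ennreal (Tl q R)"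
  proof -
    have "(\<integral>\<^sup>+x. ennreal ((norm (g x))\<^sup>2) \<partial>lborel) \<le> (\<integral>\<^sup>+x. ennreal (indicator {x. R < \<bar>x\<bar>} x * (norm (q x))\<^sup>2) \<partial>lborel)"
      unfolding g_def by (intro nn_integral_mono ennreal_leI trunc_q_sq)
    then show ?thesis unfolding Tl_nn[OF qm q2] .
  qed
  have gshift: "(\<integral>\<^sup>+x. ennreal ((norm (g (x + y)))\<^sup>2) \<partial>lborel) = (\<integral>\<^sup>+x. ennreal ((norm (g x))\<^sup>2) \<partial>lborel)"
    using nn_integral_real_affine[where c=1 and t=y and f="\<lambda>x. ennreal ((norm (g x))\<^sup>2)"]
    by (simp add: add.commute)
  have "(\<integral>\<^sup>+x. ennreal ((norm (trunc R q (x + y) - trunc R q x))\<^sup>2) \<partial>lborel)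
      \<le> (\<integral>\<^sup>+x. ennreal (3 * (norm (q (x + y) - q x))\<^sup>2) + (ennreal (3 * (norm (g (x + y)))\<^sup>2) + ennreal (3 * (norm (- g x))\<^sup>2)) \<partial>lborel)"
  proof (intro nn_integral_mono)
    fix x
    have "trunc R q (x + y) - trunc R q x = (q (x + y) - q x) + g (x + y) + (- g x)"
      unfolding g_def by simp
    then have "(norm (trunc R q (x + y) - trunc R q x))\<^sup>2 \<le> 3 * (norm (q (x + y) - q x))\<^sup>2 + 3 * (norm (g (x + y)))\<^sup>2 + 3 * (norm (- g x))\<^sup>2"
      using norm3_sq[of "q (x + y) - q x" "g (x + y)" "- g x"] by simp
    then have "ennreal ((norm (trunc R q (x + y) - trunc R q x))\<^sup>2) \<le> ennreal (3 * (norm (q (x + y) - q x))\<^sup>2 + (3 * (norm (g (x + y)))\<^sup>2 + 3 * (norm (- g x))\<^sup>2))"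
      by (intro ennreal_leI) (simp add: add.assoc)
    also have "\<dots> = ennreal (3 * (norm (q (x + y) - q x))\<^sup>2) + (ennreal (3 * (norm (g (x + y)))\<^sup>2) + ennreal (3 * (norm (- g x))\<^sup>2))"
      by (simp add: ennreal_plus)
    finally show "ennreal ((norm (trunc R q (x + y) - trunc R q x))\<^sup>2) \<le> ennreal (3 * (norm (q (x + y) - q x))\<^sup>2) + (ennreal (3 * (norm (g (x + y)))\<^sup>2) + ennreal (3 * (norm (- g x))\<^sup>2))" .
  qed
  also have "\<dots> = (\<integral>\<^sup>+x. ennreal (3 * (norm (q (x + y) - q x))\<^sup>2) \<partial>lborel) + ((\<integral>\<^sup>+x. ennreal (3 * (norm (g (x + y)))\<^sup>2) \<partial>lborel) + (\<integral>\<^sup>+x. ennreal (3 * (norm (- g x))\<^sup>2) \<partial>lborel))"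
  proof -
    have e1: "(\<integral>\<^sup>+x. ennreal (3 * (norm (g (x + y)))\<^sup>2) + ennreal (3 * (norm (- g x))\<^sup>2) \<partial>lborel) = (\<integral>\<^sup>+x. ennreal (3 * (norm (g (x + y)))\<^sup>2) \<partial>lborel) + (\<integral>\<^sup>+x. ennreal (3 * (norm (- g x))\<^sup>2) \<partial>lborel)"
      by (rule nn_integral_add) measurable
    have e2: "(\<integral>\<^sup>+x. ennreal (3 * (norm (q (x + y) - q x))\<^sup>2) + (ennreal (3 * (norm (g (x + y)))\<^sup>2) + ennreal (3 * (norm (- g x))\<^sup>2)) \<partial>lborel)
       = (\<integral>\<^sup>+x. ennreal (3 * (norm (q (x + y) - q x))\<^sup>2) \<partial>lborel) + (\<integral>\<^sup>+x. ennreal (3 * (norm (g (x + y)))\<^sup>2) + ennreal (3 * (norm (- g x))\<^sup>2) \<partial>lborel)"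
      by (rule nn_integral_add) measurable
    show ?thesis unfolding e2 e1 ..
  qed
  also have "\<dots> = ennreal 3 * (\<integral>\<^sup>+x. ennreal ((norm (q (x + y) - q x))\<^sup>2) \<partial>lborel) + (ennreal 3 * (\<integral>\<^sup>+x. ennreal ((norm (g (x + y)))\<^sup>2) \<partial>lborel) + ennreal 3 * (\<integral>\<^sup>+x. ennreal ((norm (g x))\<^sup>2) \<partial>lborel))"
  proof -
    have c1: "(\<integral>\<^sup>+x. ennreal (3 * (norm (q (x + y) - q x))\<^sup>2) \<partial>lborel) = ennreal 3 * (\<integral>\<^sup>+x. ennreal ((norm (q (x + y) - q x))\<^sup>2) \<partial>lborel)"
      by (rule nn_cmult_real) auto
    have c2: "(\<integral>\<^sup>+x. ennreal (3 * (norm (g (x + y)))\<^sup>2) \<partial>lborel) = ennreal 3 * (\<integral>\<^sup>+x. ennreal ((norm (g (x + y)))\<^sup>2) \<partial>lborel)"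
      by (rule nn_cmult_real) auto
    have c3: "(\<integral>\<^sup>+x. ennreal (3 * (norm (- g x))\<^sup>2) \<partial>lborel) = ennreal 3 * (\<integral>\<^sup>+x. ennreal ((norm (g x))\<^sup>2) \<partial>lborel)"
      using nn_cmult_real[of 3 "\<lambda>x. (norm (g x))\<^sup>2" lborel] by simp
    show ?thesis unfolding c1 c2 c3 ..
  qed
  also have "\<dots> \<le> ennreal 3 * ennreal B + (ennreal 3 * ennreal (Tl q R) + ennreal 3 * ennreal (Tl q R))"
    unfolding gshift by (intro add_mono mult_left_mono B gT order_refl) auto
  also have "\<dots> = ennreal (3 * B + 6 * Tl q R)"
  proof -
    have T0: "0 \<le> Tl q R" by (rule Tl_nonneg)
    have "ennreal (3 * B + 6 * Tl q R) = ennreal (3 * B + (3 * Tl q R + 3 * Tl q R))" by simp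
    also have "\<dots> = ennreal (3 * B) + (ennreal (3 * Tl q R) + ennreal (3 * Tl q R))"
    proof -
      have a: "ennreal (3 * Tl q R + 3 * Tl q R) = ennreal (3 * Tl q R) + ennreal (3 * Tl q R)"
        by (rule ennreal_plus) (use T0 in auto)
      have b: "ennreal (3 * B + (3 * Tl q R + 3 * Tl q R)) = ennreal (3 * B) + ennreal (3 * Tl q R + 3 * Tl q R)"
        by (rule ennreal_plus) (use B0 T0 in auto)
      show ?thesis unfolding b a ..
    qed
    also have "\<dots> = ennreal 3 * ennreal B + (ennreal 3 * ennreal (Tl q R) + ennreal 3 * ennreal (Tl q R))"
      using B0 T0 by (simp only: ennreal_mult[of 3] order_refl zero_le_numeral)
    finally show ?thesis ..
  qed
  finally show ?thesis .
qed

lemma J_bound: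
  assumes eta: "\<eta> > 0" and d0: "0 \<le> \<delta>"
    and wb: "\<And>\<xi>. w \<xi> \<le> \<delta> + indicator {\<xi>. 2 / \<eta> \<le> \<bar>\<xi>\<bar>} \<xi>"
    and B: "\<And>y. y \<in> {0..\<eta>} \<Longrightarrow> (\<integral>\<^sup>+x. ennreal ((norm (q (x + y) - q x))\<^sup>2) \<partial>lborel) \<le> ennreal B"
    and B0: "0 \<le> B"
  shows "J R \<le> \<delta> * Q2 + (3 * B + 6 * Tl q R)"
proof -
  define a where "a = fourier (trunc R q)"
  have am[measurable]: "a \<in> borel_measurable borel" unfolding a_def by measurable
  have "ennreal (J R) = (\<integral>\<^sup>+\<xi>. ennreal (w \<xi> * (norm (a \<xi>))\<^sup>2) \<partial>lborel)"
    unfolding J_def a_def using w0 by (intro nn_integral_eq_integral[symmetric] J_int) auto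
  also have "\<dots> \<le> (\<integral>\<^sup>+\<xi>. ennreal (\<delta> * (norm (a \<xi>))\<^sup>2) + indicator {\<xi>. 2 / \<eta> \<le> \<bar>\<xi>\<bar>} \<xi> * ennreal ((norm (a \<xi>))\<^sup>2) \<partial>lborel)"
  proof (intro nn_integral_mono)
    fix \<xi>
    have "w \<xi> * (norm (a \<xi>))\<^sup>2 \<le> (\<delta> + indicator {\<xi>. 2 / \<eta> \<le> \<bar>\<xi>\<bar>} \<xi>) * (norm (a \<xi>))\<^sup>2"
      using wb[of \<xi>] by (intro mult_right_mono) auto
    then have "ennreal (w \<xi> * (norm (a \<xi>))\<^sup>2) \<le> ennreal (\<delta> * (norm (a \<xi>))\<^sup>2 + indicator {\<xi>. 2 / \<eta> \<le> \<bar>\<xi>\<bar>} \<xi> * (norm (a \<xi>))\<^sup>2)"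
      by (intro ennreal_leI) (simp add: algebra_simps)
    also have "\<dots> = ennreal (\<delta> * (norm (a \<xi>))\<^sup>2) + indicator {\<xi>. 2 / \<eta> \<le> \<bar>\<xi>\<bar>} \<xi> * ennreal ((norm (a \<xi>))\<^sup>2)"
      using d0 by (simp add: ennreal_plus split: split_indicator)
    finally show "ennreal (w \<xi> * (norm (a \<xi>))\<^sup>2) \<le> ennreal (\<delta> * (norm (a \<xi>))\<^sup>2) + indicator {\<xi>. 2 / \<eta> \<le> \<bar>\<xi>\<bar>} \<xi> * ennreal ((norm (a \<xi>))\<^sup>2)" .
  qed
  also have "\<dots> = ennreal \<delta> * (\<integral>\<^sup>+\<xi>. ennreal ((norm (a \<xi>))\<^sup>2) \<partial>lborel) + (\<integral>\<^sup>+\<xi>. indicator {\<xi>. 2 / \<eta> \<le> \<bar>\<xi>\<bar>} \<xi> * ennreal ((norm (a \<xi>))\<^sup>2) \<partial>lborel)"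
  proof -
    have e1: "(\<integral>\<^sup>+\<xi>. ennreal (\<delta> * (norm (a \<xi>))\<^sup>2) + indicator {\<xi>. 2 / \<eta> \<le> \<bar>\<xi>\<bar>} \<xi> * ennreal ((norm (a \<xi>))\<^sup>2) \<partial>lborel)
      = (\<integral>\<^sup>+\<xi>. ennreal (\<delta> * (norm (a \<xi>))\<^sup>2) \<partial>lborel) + (\<integral>\<^sup>+\<xi>. indicator {\<xi>. 2 / \<eta> \<le> \<bar>\<xi>\<bar>} \<xi> * ennreal ((norm (a \<xi>))\<^sup>2) \<partial>lborel)"
      by (rule nn_integral_add) measurable
    have e2: "(\<integral>\<^sup>+\<xi>. ennreal (\<delta> * (norm (a \<xi>))\<^sup>2) \<partial>lborel) = ennreal \<delta> * (\<integral>\<^sup>+\<xi>. ennreal ((norm (a \<xi>))\<^sup>2) \<partial>lborel)"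
      by (rule nn_cmult_real) (use d0 in auto)
    show ?thesis unfolding e1 e2 ..
  qed
  also have "\<dots> \<le> ennreal \<delta> * ennreal Q2 + ennreal (3 * B + 6 * Tl q R)"
  proof (intro add_mono mult_left_mono)
    show "(\<integral>\<^sup>+\<xi>. ennreal ((norm (a \<xi>))\<^sup>2) \<partial>lborel) \<le> ennreal Q2" unfolding a_def by (rule nn_ft)
    show "(\<integral>\<^sup>+\<xi>. indicator {\<xi>. 2 / \<eta> \<le> \<bar>\<xi>\<bar>} \<xi> * ennreal ((norm (a \<xi>))\<^sup>2) \<partial>lborel) \<le> ennreal (3 * B + 6 * Tl q R)"
      unfolding a_def
      by (rule high_freq[OF _ trunc_int[OF qm q2] eta]) (simp_all add: shift_bound B B0)
  qed simp
  also have "\<dots> = ennreal (\<delta> * Q2 + (3 * B + 6 * Tl q R))"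
    using d0 Q2_nonneg B0 Tl_nonneg[of R] by (simp add: ennreal_mult ennreal_plus)
  finally show ?thesis
    using d0 Q2_nonneg B0 Tl_nonneg[of R] by (subst (asm) ennreal_le_iff) auto
qed

end

context qsetup
begin

lemma Lim_bound:
  assumes eta: "\<eta> > 0" and d0: "0 \<le> \<delta>"
    and wb: "\<And>\<xi>. w \<xi> \<le> \<delta> + indicator {\<xi>. 2 / \<eta> \<le> \<bar>\<xi>\<bar>} \<xi>"
    and B: "\<And>y. y \<in> {0..\<eta>} \<Longrightarrow> (\<integral>\<^sup>+x. ennreal ((norm (q (x + y) - q x))\<^sup>2) \<partial>lborel) \<le> ennreal B"
    and B0: "0 \<le> B"
  shows "Lim at_top J \<le> \<delta> * Q2 + 3 * B"
proof -
  obtain L where L: "(J \<longlongrightarrow> L) at_top" using J_conv by blast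
  have "Lim at_top J = L" by (rule tendsto_Lim[OF _ L]) simp
  moreover have "L \<le> \<delta> * Q2 + 3 * B"
  proof (rule tendsto_le[OF _ _ L])
    show "((\<lambda>R. \<delta> * Q2 + (3 * B + 6 * Tl q R)) \<longlongrightarrow> \<delta> * Q2 + 3 * B) at_top"
      using Tl_tendsto[OF qm q2] by (auto intro!: tendsto_eq_intros)
    show "\<forall>\<^sub>F R in at_top. J R \<le> \<delta> * Q2 + (3 * B + 6 * Tl q R)"
      by (intro always_eventually allI J_bound[OF eta d0 wb B B0]) auto
  qed simp
  ultimately show ?thesis by simp
qed

end

lemma weight_props:
  assumes s: "\<sigma> > 0" and k: "\<kappa> > 0"
  shows "E_weight \<sigma> \<sigma> \<kappa> \<in> borel_measurable borel"
    and "0 \<le> E_weight \<sigma> \<sigma> \<kappa> \<xi>"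
    and "E_weight \<sigma> \<sigma> \<kappa> \<xi> \<le> 1"
    and "\<eta> > 0 \<Longrightarrow> E_weight \<sigma> \<sigma> \<kappa> \<xi> \<le> ((1 / (\<eta> * \<kappa>))\<^sup>2) powr \<sigma> + indicator {\<xi>. 2 / \<eta> \<le> \<bar>\<xi>\<bar>} \<xi>"
proof -
  have eq: "E_weight \<sigma> \<sigma> \<kappa> \<xi> = (\<xi>\<^sup>2) powr \<sigma> / (4 * \<kappa>\<^sup>2 + \<xi>\<^sup>2) powr \<sigma>" for \<xi>
  proof -
    have "\<bar>\<xi>\<bar> powr (2 * \<sigma>) = (\<bar>\<xi>\<bar> powr 2) powr \<sigma>" by (rule powr_powr[symmetric])
    also have "\<bar>\<xi>\<bar> powr 2 = \<xi>\<^sup>2" by simp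
    finally show ?thesis unfolding E_weight_def using k by simp
  qed
  have Kpos: "0 < 4 * \<kappa>\<^sup>2 + \<xi>\<^sup>2" for \<xi> using k by (simp add: add_pos_nonneg)
  show "E_weight \<sigma> \<sigma> \<kappa> \<in> borel_measurable borel"
    unfolding E_weight_def by measurable
  show "0 \<le> E_weight \<sigma> \<sigma> \<kappa> \<xi>" unfolding eq by simp
  have le1: "E_weight \<sigma> \<sigma> \<kappa> \<xi> \<le> 1" for \<xi>
  proof -
    have "(\<xi>\<^sup>2) powr \<sigma> \<le> (4 * \<kappa>\<^sup>2 + \<xi>\<^sup>2) powr \<sigma>" using s by (intro powr_mono2) auto
    moreover have "0 < (4 * \<kappa>\<^sup>2 + \<xi>\<^sup>2) powr \<sigma>" using Kpos[of \<xi>] by simp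
    ultimately show ?thesis unfolding eq by simp
  qed
  then show "E_weight \<sigma> \<sigma> \<kappa> \<xi> \<le> 1" .
  assume eta: "\<eta> > 0"
  show "E_weight \<sigma> \<sigma> \<kappa> \<xi> \<le> ((1 / (\<eta> * \<kappa>))\<^sup>2) powr \<sigma> + indicator {\<xi>. 2 / \<eta> \<le> \<bar>\<xi>\<bar>} \<xi>"
  proof (cases "2 / \<eta> \<le> \<bar>\<xi>\<bar>")
    case True
    have i: "indicator {\<xi>. 2 / \<eta> \<le> \<bar>\<xi>\<bar>} \<xi> = (1::real)" using True by simp
    have p: "0 \<le> ((1 / (\<eta> * \<kappa>))\<^sup>2) powr \<sigma>" by (rule powr_ge_zero)
    show ?thesis unfolding i using le1[of \<xi>] p by linarith
  next
    case False
    have k4: "0 < (4 * \<kappa>\<^sup>2) powr \<sigma>" using k by simp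
    have "E_weight \<sigma> \<sigma> \<kappa> \<xi> \<le> (\<xi>\<^sup>2) powr \<sigma> / (4 * \<kappa>\<^sup>2) powr \<sigma>"
    proof -
      have pp: "0 < (4 * \<kappa>\<^sup>2 + \<xi>\<^sup>2) powr \<sigma> * (4 * \<kappa>\<^sup>2) powr \<sigma>"
        using Kpos[of \<xi>] k4 by (intro mult_pos_pos) auto
      show ?thesis unfolding eq using s k pp by (intro divide_left_mono powr_mono2) auto
    qed
    also have "\<dots> \<le> ((2 / \<eta>)\<^sup>2) powr \<sigma> / (4 * \<kappa>\<^sup>2) powr \<sigma>"
    proof (intro divide_right_mono powr_mono2)
      have "\<bar>\<xi>\<bar> \<le> 2 / \<eta>" using False by simp
      then have "\<bar>\<xi>\<bar>\<^sup>2 \<le> (2 / \<eta>)\<^sup>2" by (intro power_mono) auto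
      then show "\<xi>\<^sup>2 \<le> (2 / \<eta>)\<^sup>2" by simp
    qed (use s in auto)
    also have "\<dots> = ((2 / \<eta>)\<^sup>2 / (4 * \<kappa>\<^sup>2)) powr \<sigma>" by (simp add: powr_divide)
    also have "(2 / \<eta>)\<^sup>2 / (4 * \<kappa>\<^sup>2) = (1 / (\<eta> * \<kappa>))\<^sup>2"
      using eta k by (simp add: power2_eq_square field_simps)
    finally show ?thesis using False by simp
  qed
qed

lemma L2_space_props:
  assumes "q \<in> L2_space"
  shows "q \<in> borel_measurable borel" "integrable lborel (\<lambda>x. (norm (q x))\<^sup>2)"
  using assms unfolding L2_space_def by auto

lemma L2_shift_nn:
  assumes qm[measurable]: "q \<in> borel_measurable borel" and q2: "integrable lborel (\<lambda>x. (norm (q x))\<^sup>2)"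
    and lt: "L2_norm (\<lambda>x. q (x + y) - q x) < \<epsilon>"
  shows "(\<integral>\<^sup>+x. ennreal ((norm (q (x + y) - q x))\<^sup>2) \<partial>lborel) \<le> ennreal (\<epsilon>\<^sup>2)"
proof -
  have sh: "integrable lborel (\<lambda>x. (norm (q (x + y)))\<^sup>2)"
    using lborel_integrable_real_affine[OF q2, of 1 y] by (simp add: add.commute)
  have int: "integrable lborel (\<lambda>x. (norm (q (x + y) - q x))\<^sup>2)"
  proof (rule Bochner_Integration.integrable_bound[where f="\<lambda>x. 2 * (norm (q (x + y)))\<^sup>2 + 2 * (norm (q x))\<^sup>2"])
    show "integrable lborel (\<lambda>x. 2 * (norm (q (x + y)))\<^sup>2 + 2 * (norm (q x))\<^sup>2)"
      using sh q2 by auto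
    show "AE x in lborel. norm ((norm (q (x + y) - q x))\<^sup>2) \<le> norm (2 * (norm (q (x + y)))\<^sup>2 + 2 * (norm (q x))\<^sup>2)"
    proof (rule AE_I2)
      fix x
      have "norm (q (x + y) - q x) \<le> norm (q (x + y)) + norm (q x)" by (rule norm_triangle_ineq4)
      then have "(norm (q (x + y) - q x))\<^sup>2 \<le> (norm (q (x + y)) + norm (q x))\<^sup>2" by (intro power_mono) auto
      also have "\<dots> \<le> 2 * (norm (q (x + y)))\<^sup>2 + 2 * (norm (q x))\<^sup>2"
        using zero_le_power2[of "norm (q (x + y)) - norm (q x)"] by (simp add: power2_eq_square algebra_simps)
      finally show "norm ((norm (q (x + y) - q x))\<^sup>2) \<le> norm (2 * (norm (q (x + y)))\<^sup>2 + 2 * (norm (q x))\<^sup>2)" by simp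
    qed
  qed measurable
  define I where "I = (LINT x|lborel. (norm (q (x + y) - q x))\<^sup>2)"
  have I0: "0 \<le> I" unfolding I_def by simp
  have "sqrt I < \<epsilon>" using lt unfolding L2_norm_def I_def .
  then have "(sqrt I)\<^sup>2 < \<epsilon>\<^sup>2" using I0 by (intro power_strict_mono) auto
  then have "I < \<epsilon>\<^sup>2" using I0 by simp
  have "(\<integral>\<^sup>+x. ennreal ((norm (q (x + y) - q x))\<^sup>2) \<partial>lborel) = ennreal I"
    unfolding I_def by (intro nn_integral_eq_integral int) auto
  also have "\<dots> \<le> ennreal (\<epsilon>\<^sup>2)" using \<open>I < \<epsilon>\<^sup>2\<close> by (intro ennreal_leI) simp
  finally show ?thesis .
qed

lemma per_q_bound:
  assumes qL: "q \<in> L2_space" and s: "\<sigma> > 0" and k: "\<kappa> > 0" and eta: "\<eta> > 0" and ep: "\<epsilon> > 0"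
    and sh: "\<And>y. \<bar>y\<bar> \<le> \<eta> \<Longrightarrow> L2_norm (\<lambda>x. q (x + y) - q x) < \<epsilon>"
  shows "E_norm_sq \<sigma> \<sigma> \<kappa> q \<le> ((1 / (\<eta> * \<kappa>))\<^sup>2) powr \<sigma> * (LINT x|lborel. (norm (q x))\<^sup>2) + 3 * \<epsilon>\<^sup>2"
proof -
  note qp = L2_space_props[OF qL]
  interpret qsetup q "E_weight \<sigma> \<sigma> \<kappa>"
    by unfold_locales (use qp weight_props[OF s k] in auto)
  have "(\<lambda>R. LINT \<xi>|lborel. E_weight \<sigma> \<sigma> \<kappa> \<xi> * (norm (fourier (trunc R q) \<xi>))\<^sup>2) = J"
    by (rule ext) (simp only: J_def)
  then have "E_norm_sq \<sigma> \<sigma> \<kappa> q = Lim at_top J" unfolding E_norm_sq_def by simp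
  also have "\<dots> \<le> ((1 / (\<eta> * \<kappa>))\<^sup>2) powr \<sigma> * Q2 + 3 * \<epsilon>\<^sup>2"
  proof (rule Lim_bound[OF eta])
    show "0 \<le> ((1 / (\<eta> * \<kappa>))\<^sup>2) powr \<sigma>" by simp
    show "E_weight \<sigma> \<sigma> \<kappa> \<xi> \<le> ((1 / (\<eta> * \<kappa>))\<^sup>2) powr \<sigma> + indicator {\<xi>. 2 / \<eta> \<le> \<bar>\<xi>\<bar>} \<xi>" for \<xi>
      by (rule weight_props(4)[OF s k eta])
    show "(\<integral>\<^sup>+x. ennreal ((norm (q (x + y) - q x))\<^sup>2) \<partial>lborel) \<le> ennreal (\<epsilon>\<^sup>2)" if "y \<in> {0..\<eta>}" for y
      by (rule L2_shift_nn[OF qp sh]) (use that in auto)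
  qed simp
  finally show ?thesis unfolding Q2_def .
qed

theorem lemma2p1:
  fixes Q :: "(real \<Rightarrow> complex) set" and \<sigma> :: real
  assumes "Q \<subseteq> L2_space"
    and "\<exists>C. \<forall>q\<in>Q. L2_norm q \<le> C"
    and "L2_equicontinuous Q"
    and "\<sigma> > 0"
  shows "((\<lambda>\<kappa>. SUP q\<in>Q. ennreal (E_norm \<sigma> \<sigma> \<kappa> q)) \<longlongrightarrow> 0) at_top"
proof -
  note QL = assms(1) and s = assms(4)
  from assms(2) obtain C where C: "\<And>q. q \<in> Q \<Longrightarrow> L2_norm q \<le> C" by blast
  have Q2C: "(LINT x|lborel. (norm (q x))\<^sup>2) \<le> C\<^sup>2" if q: "q \<in> Q" for q
  proof -
    define I where "I = (LINT x|lborel. (norm (q x))\<^sup>2)"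
    have I0: "0 \<le> I" unfolding I_def by simp
    have "sqrt I \<le> C" using C[OF q] unfolding L2_norm_def I_def .
    then have "(sqrt I)\<^sup>2 \<le> C\<^sup>2" using I0 by (intro power_mono) auto
    then show ?thesis using I0 unfolding I_def by simp
  qed
  show ?thesis
  proof (rule order_tendstoI)
    fix a :: ennreal assume "a < 0" then show "\<forall>\<^sub>F \<kappa> in at_top. a < (SUP q\<in>Q. ennreal (E_norm \<sigma> \<sigma> \<kappa> q))" by simp
  next
    fix a :: ennreal assume a: "0 < a"
    obtain b where b: "0 < b" "b < a" using dense[OF a] by blast
    have btop: "b \<noteq> top" using b(2) by auto
    define e where "e = enn2real b"
    have be: "b = ennreal e" unfolding e_def using btop by (simp add: ennreal_enn2real_if)
    have e: "0 < e" unfolding e_def using b(1) btop by (simp add: enn2real_positive_iff less_top)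
    define \<epsilon> where "\<epsilon> = e / 4"
    have ep: "\<epsilon> > 0" unfolding \<epsilon>_def using e by simp
    obtain \<eta>0 where \<eta>0: "\<eta>0 > 0" and eq: "\<And>q y. q \<in> Q \<Longrightarrow> \<bar>y\<bar> < \<eta>0 \<Longrightarrow> L2_norm (\<lambda>x. q (x + y) - q x) < \<epsilon>"
      using assms(3) ep unfolding L2_equicontinuous_def by blast
    define \<eta> where "\<eta> = \<eta>0 / 2"
    have eta: "\<eta> > 0" unfolding \<eta>_def using \<eta>0 by simp
    define \<delta> where "\<delta> \<kappa> = ((1 / (\<eta> * \<kappa>))\<^sup>2) powr \<sigma>" for \<kappa>
    have "((\<lambda>\<kappa>. \<delta> \<kappa> * C\<^sup>2) \<longlongrightarrow> 0 * C\<^sup>2) at_top"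
    proof (intro tendsto_mult tendsto_const)
      have "filterlim (\<lambda>\<kappa>. \<eta> * \<kappa>) at_top at_top"
        by (rule filterlim_tendsto_pos_mult_at_top[OF tendsto_const eta filterlim_ident])
      then have "((\<lambda>\<kappa>. 1 / (\<eta> * \<kappa>)) \<longlongrightarrow> 0) at_top"
        by (intro tendsto_divide_0[OF tendsto_const] filterlim_at_top_imp_at_infinity)
      then have "((\<lambda>\<kappa>. (1 / (\<eta> * \<kappa>))\<^sup>2) \<longlongrightarrow> 0) at_top"
        using tendsto_power[of _ 0 at_top 2] by simp
      then show "(\<delta> \<longlongrightarrow> 0) at_top"
        unfolding \<delta>_def[abs_def] using s by (intro tendsto_zero_powrI tendsto_const) auto
    qed
    then have ev1: "\<forall>\<^sub>F \<kappa> in at_top. \<delta> \<kappa> * C\<^sup>2 < e\<^sup>2 / 4"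
      using e by (intro order_tendstoD(2)) auto
    have ev2: "\<forall>\<^sub>F \<kappa> in at_top. (1::real) \<le> \<kappa>" by (rule eventually_ge_at_top)
    show "\<forall>\<^sub>F \<kappa> in at_top. (SUP q\<in>Q. ennreal (E_norm \<sigma> \<sigma> \<kappa> q)) < a"
      using ev1 ev2
    proof eventually_elim
      fix \<kappa> :: real assume k1: "\<delta> \<kappa> * C\<^sup>2 < e\<^sup>2 / 4" and k2: "1 \<le> \<kappa>"
      have k: "\<kappa> > 0" using k2 by simp
      have "E_norm \<sigma> \<sigma> \<kappa> q \<le> e" if q: "q \<in> Q" for q
      proof -
        have "E_norm_sq \<sigma> \<sigma> \<kappa> q \<le> \<delta> \<kappa> * (LINT x|lborel. (norm (q x))\<^sup>2) + 3 * \<epsilon>\<^sup>2"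
          unfolding \<delta>_def
        proof (rule per_q_bound[OF _ s k eta ep])
          show "q \<in> L2_space" using QL q by auto
          show "L2_norm (\<lambda>x. q (x + y) - q x) < \<epsilon>" if "\<bar>y\<bar> \<le> \<eta>" for y
            using eq[OF q] that \<eta>0 unfolding \<eta>_def by auto
        qed
        also have "\<dots> \<le> \<delta> \<kappa> * C\<^sup>2 + 3 * \<epsilon>\<^sup>2"
          using Q2C[OF q] unfolding \<delta>_def by (intro add_mono mult_left_mono) auto
        also have "\<dots> \<le> e\<^sup>2"
        proof -
          have h3: "\<epsilon>\<^sup>2 = e\<^sup>2 / 16" unfolding \<epsilon>_def by (simp add: power_divide)
          have "0 \<le> e\<^sup>2" by simp
          then show ?thesis using k1 h3 by linarith
        qed
        finally have "E_norm_sq \<sigma> \<sigma> \<kappa> q \<le> e\<^sup>2" .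
        then have "sqrt (E_norm_sq \<sigma> \<sigma> \<kappa> q) \<le> sqrt (e\<^sup>2)" by (rule real_sqrt_le_mono)
        then show ?thesis unfolding E_norm_def using e by simp
      qed
      then have "(SUP q\<in>Q. ennreal (E_norm \<sigma> \<sigma> \<kappa> q)) \<le> b"
        unfolding be by (intro SUP_least ennreal_leI) auto
      then show "(SUP q\<in>Q. ennreal (E_norm \<sigma> \<sigma> \<kappa> q)) < a" using b(2) by (rule le_less_trans)
    qed
  qed
qed

end
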